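(* Let $A_0$ be a Dedekind domain, $Y=\operatorname{Spec}A_0$, and let $D_1,\dots,D_r$ be $\mathbb{Q}$-divisors on $Y$. Then the $A_0$-algebra $$B=\bigoplus_{(m_1,\dots,m_r)\in\mathbb{N}^r}H^0\Big(Y,\mathcal{O}_Y\Big(\Big\lfloor\sum_{i=1}^r m_iD_i\Big\rfloor\Big)\Big)$$ (with multiplication induced by multiplication in the fraction field of $A_0$) is finitely generated.
   Context: For a $\mathbb{Q}$-divisor $D$ on $Y$, $H^0(Y,\mathcal{O}_Y(\lfloor D\rfloor))=\{g\in K_0^\star:\operatorname{div}g+\lfloor D\rfloor\ge0\}\cup\{0\}$, where $K_0=\operatorname{Frac}A_0$ and $\lfloor\cdot\rfloor$ takes integer parts of coefficients. *)

theory Defs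
  imports "HOL-Computational_Algebra.Polynomial_Factorial" "HOL-Library.Poly_Mapping"
begin

definition ring_ideal :: "'a::comm_ring_1 set \<Rightarrow> bool" where
  "ring_ideal I \<longleftrightarrow> 0 \<in> I \<and> (\<forall>x\<in>I. \<forall>y\<in>I. x + y \<in> I) \<and> (\<forall>r. \<forall>x\<in>I. r * x \<in> I)"

definition ideal_span :: "'a::comm_ring_1 set \<Rightarrow> 'a set" where
  "ideal_span S = {x. \<exists>k (c::nat \<Rightarrow> 'a) s. (\<forall>i<k. s i \<in> S) \<and> x = (\<Sum>i<k. c i * s i)}"

definition prime_ideal :: "'a::comm_ring_1 set \<Rightarrow> bool" where
  "prime_ideal P \<longleftrightarrow> ring_ideal P \<and> P \<noteq> UNIV \<and> (\<forall>a b. a * b \<in> P \<longrightarrow> a \<in> P \<or> b \<in> P)"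

definition maximal_ideal :: "'a::comm_ring_1 set \<Rightarrow> bool" where
  "maximal_ideal M \<longleftrightarrow> ring_ideal M \<and> M \<noteq> UNIV \<and>
     (\<forall>J. ring_ideal J \<and> M \<subseteq> J \<longrightarrow> J = M \<or> J = UNIV)"

definition noetherian_ring :: "'a::comm_ring_1 itself \<Rightarrow> bool" where
  "noetherian_ring _ \<longleftrightarrow> (\<forall>I::'a set. ring_ideal I \<longrightarrow> (\<exists>S. finite S \<and> I = ideal_span S))"

text \<open>Krull dimension at most one (for a domain): every nonzero prime ideal is maximal.\<close>
definition dim_le_one :: "'a::comm_ring_1 itself \<Rightarrow> bool" where
  "dim_le_one _ \<longleftrightarrow> (\<forall>P::'a set. prime_ideal P \<and> P \<noteq> {0} \<longrightarrow> maximal_ideal P)"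

definition integrally_closed :: "'a::idom itself \<Rightarrow> bool" where
  "integrally_closed _ \<longleftrightarrow>
     (\<forall>x::'a fract. (\<exists>p::'a poly. lead_coeff p = 1 \<and> poly (map_poly to_fract p) x = 0)
        \<longrightarrow> x \<in> range to_fract)"

definition dedekind_domain :: "'a::idom itself \<Rightarrow> bool" where
  "dedekind_domain T \<longleftrightarrow> noetherian_ring T \<and> dim_le_one T \<and> integrally_closed T"

text \<open>Prime divisors of Spec A_0: the height-one primes, i.e. (dimension \<le> 1) the nonzero primes.\<close>
definition prime_divisor :: "'a::idom set \<Rightarrow> bool" where
  "prime_divisor P \<longleftrightarrow> prime_ideal P \<and> P \<noteq> {0}"

definition Q_divisor :: "('a::idom set \<Rightarrow> rat) \<Rightarrow> bool" where
  "Q_divisor D \<longleftrightarrow> finite {P. D P \<noteq> 0} \<and> (\<forall>P. D P \<noteq> 0 \<longrightarrow> prime_divisor P)"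

definition ideal_pow :: "'a::comm_ring_1 set \<Rightarrow> nat \<Rightarrow> 'a set" where
  "ideal_pow P n = ideal_span {(\<Prod>i<n. x i) | x. \<forall>i<n. x i \<in> P}"

text \<open>Valuation of a nonzero element a of A_0 at P (order in the local ring at P).\<close>
definition val_at :: "'a::idom set \<Rightarrow> 'a \<Rightarrow> nat" where
  "val_at P a = (GREATEST n. \<exists>s. s \<notin> P \<and> s * a \<in> ideal_pow P n)"

definition ord_at :: "'a::idom set \<Rightarrow> 'a fract \<Rightarrow> int" where
  "ord_at P g = (THE k. \<exists>a b. a \<noteq> 0 \<and> b \<noteq> 0 \<and> g = Fract a b \<and>
                        k = int (val_at P a) - int (val_at P b))"

definition H0 :: "('a::idom set \<Rightarrow> rat) \<Rightarrow> 'a fract set" where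
  "H0 D = {g. g \<noteq> 0 \<and> (\<forall>P. prime_divisor P \<longrightarrow> ord_at P g + \<lfloor>D P\<rfloor> \<ge> 0)} \<union> {0}"

text \<open>B is realised inside the multigraded ring K_0[N^r] (finitely supported
  functions from exponent vectors to K_0, with convolution product), as the
  elements whose degree-m component lies in H^0(floor(sum m_i D_i)).\<close>
definition section_ring :: "nat \<Rightarrow> (nat \<Rightarrow> 'a::idom set \<Rightarrow> rat) \<Rightarrow> ((nat \<Rightarrow>\<^sub>0 nat) \<Rightarrow>\<^sub>0 'a fract) set" where
  "section_ring r D = {f :: (nat \<Rightarrow>\<^sub>0 nat) \<Rightarrow>\<^sub>0 'a fract. \<forall>m::(nat \<Rightarrow>\<^sub>0 nat). Poly_Mapping.lookup f m \<noteq> 0 \<longrightarrow>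
      Poly_Mapping.keys m \<subseteq> {..<r} \<and> Poly_Mapping.lookup f m \<in> H0 (\<lambda>P. \<Sum>i<r. of_nat (Poly_Mapping.lookup m i) * D i P)}"

inductive_set A0_subalgebra :: "((nat \<Rightarrow>\<^sub>0 nat) \<Rightarrow>\<^sub>0 'a::idom fract) set \<Rightarrow> ((nat \<Rightarrow>\<^sub>0 nat) \<Rightarrow>\<^sub>0 'a fract) set"
  for G where
  gen: "x \<in> G \<Longrightarrow> x \<in> A0_subalgebra G"
| scalar: "Poly_Mapping.single 0 (to_fract a) \<in> A0_subalgebra G"
| add: "x \<in> A0_subalgebra G \<Longrightarrow> y \<in> A0_subalgebra G \<Longrightarrow> x + y \<in> A0_subalgebra G"
| mult: "x \<in> A0_subalgebra G \<Longrightarrow> y \<in> A0_subalgebra G \<Longrightarrow> x * y \<in> A0_subalgebra G"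

definition finitely_generated_A0_algebra :: "((nat \<Rightarrow>\<^sub>0 nat) \<Rightarrow>\<^sub>0 'a::idom fract) set \<Rightarrow> bool" where
  "finitely_generated_A0_algebra B \<longleftrightarrow> (\<exists>G. finite G \<and> G \<subseteq> B \<and> A0_subalgebra G = B)"

end

theory Submission
  imports Defs
begin

lemma ideal_0: "ring_ideal I \<Longrightarrow> 0 \<in> I" by (simp add: ring_ideal_def)
lemma ideal_add: "ring_ideal I \<Longrightarrow> x \<in> I \<Longrightarrow> y \<in> I \<Longrightarrow> x + y \<in> I" by (simp add: ring_ideal_def)
lemma ideal_mult: "ring_ideal I \<Longrightarrow> x \<in> I \<Longrightarrow> r * x \<in> I" by (simp add: ring_ideal_def)
lemma ideal_mult2: "ring_ideal I \<Longrightarrow> x \<in> I \<Longrightarrow> x * r \<in> I"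
  by (metis ideal_mult mult.commute)
lemma ideal_sum: "ring_ideal I \<Longrightarrow> (\<And>i. i \<in> A \<Longrightarrow> f i \<in> I) \<Longrightarrow> sum f A \<in> I"
  by (induction A rule: infinite_finite_induct) (auto simp: ideal_0 ideal_add)
lemma ideal_UNIV1: "ring_ideal I \<Longrightarrow> 1 \<in> I \<Longrightarrow> I = UNIV"
  by (metis UNIV_eq_I ideal_mult mult.right_neutral)

lemma ideal_span_ideal: "ring_ideal (ideal_span S)"
proof -
  have "0 \<in> ideal_span S" unfolding ideal_span_def by (rule CollectI, rule exI[of _ 0]) simp
  moreover have "x + y \<in> ideal_span S" if xy: "x \<in> ideal_span S" "y \<in> ideal_span S" for x y
  proof -
    obtain k::nat and c s where 1: "\<forall>i<k. s i \<in> S" "x = (\<Sum>i<k. c i * s i)" using xy(1) unfolding ideal_span_def mem_Collect_eq by blast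
    obtain k'::nat and c' s' where 2: "\<forall>i<k'. s' i \<in> S" "y = (\<Sum>i<k'. c' i * s' i)" using xy(2) unfolding ideal_span_def mem_Collect_eq by blast
    define C where "C i = (if i < k then c i else c' (i - k))" for i
    define T where "T i = (if i < k then s i else s' (i - k))" for i
    have "(\<Sum>i<k+k'. C i * T i) = (\<Sum>i<k. C i * T i) + (\<Sum>i=k..<k+k'. C i * T i)"
      by (simp add: lessThan_atLeast0 sum.atLeastLessThan_concat)
    also have "(\<Sum>i<k. C i * T i) = (\<Sum>i<k. c i * s i)" by (rule sum.cong) (auto simp: C_def T_def)
    also have "(\<Sum>i=k..<k+k'. C i * T i) = (\<Sum>i=0..<k'. C (i + k) * T (i + k))"
      using sum.shift_bounds_nat_ivl[of "\<lambda>i. C i * T i" 0 k k'] by (simp add: add.commute)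
    also have "\<dots> = (\<Sum>i<k'. c' i * s' i)" by (rule sum.cong) (auto simp: C_def T_def)
    finally have "x + y = (\<Sum>i<k+k'. C i * T i)" using 1 2 by simp
    moreover have "\<forall>i<k+k'. T i \<in> S" using 1 2 by (auto simp: T_def)
    ultimately show ?thesis unfolding ideal_span_def mem_Collect_eq by (intro exI[of _ "k+k'"] exI[of _ C] exI[of _ T]) simp
  qed
  moreover have "r * x \<in> ideal_span S" if xx: "x \<in> ideal_span S" for r x
  proof -
    obtain k::nat and c s where 1: "\<forall>i<k. s i \<in> S" "x = (\<Sum>i<k. c i * s i)" using xx unfolding ideal_span_def mem_Collect_eq by blast
    have "r * x = (\<Sum>i<k. (r * c i) * s i)" using 1 by (simp add: sum_distrib_left mult.assoc)
    then show ?thesis using 1 unfolding ideal_span_def mem_Collect_eq by (intro exI[of _ k] exI[of _ "\<lambda>i. r * c i"] exI[of _ s]) simp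
  qed
  ultimately show ?thesis unfolding ring_ideal_def by blast
qed

lemma ideal_span_sub: "ring_ideal I \<Longrightarrow> S \<subseteq> I \<Longrightarrow> ideal_span S \<subseteq> I"
  unfolding ideal_span_def by (auto intro!: ideal_sum ideal_mult)

lemma ideal_span_base: "x \<in> S \<Longrightarrow> x \<in> ideal_span S"
  unfolding ideal_span_def
  by (rule CollectI, rule exI[of _ 1], rule exI[of _ "\<lambda>_. 1"], rule exI[of _ "\<lambda>_. x"]) simp

lemma noeth_acc:
  assumes "noetherian_ring TYPE('a::comm_ring_1)"
    and I: "\<And>n. ring_ideal (I n :: 'a set)" and mono: "\<And>n. I n \<subseteq> I (Suc n)"
  shows "\<exists>N. I (Suc N) \<subseteq> I N"
proof -
  have le: "I m \<subseteq> I n" if "m \<le> n" for m n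
    using that by (induction n) (auto simp: le_Suc_eq dest: mono[THEN subsetD])
  define U where "U = (\<Union>n. I n)"
  have "ring_ideal U" unfolding ring_ideal_def
  proof (intro conjI ballI allI)
    show "0 \<in> U" unfolding U_def using ideal_0[OF I[of 0]] by blast
  next
    fix x y assume xy: "x \<in> U" "y \<in> U"
    obtain m n where "x \<in> I m" "y \<in> I n" using xy U_def by auto
    then have "x \<in> I (max m n)" "y \<in> I (max m n)" using le[of m "max m n"] le[of n "max m n"] by auto
    then have "x + y \<in> I (max m n)" by (rule ideal_add[OF I])
    then show "x + y \<in> U" unfolding U_def by blast
  next
    fix r x assume "x \<in> U"
    then obtain m where "x \<in> I m" using U_def by auto
    then have "r * x \<in> I m" by (rule ideal_mult[OF I])
    then show "r * x \<in> U" unfolding U_def by blast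
  qed
  then obtain S where S: "finite S" "U = ideal_span S"
    using assms(1) unfolding noetherian_ring_def by blast
  have "\<exists>n. s \<in> I n" if "s \<in> S" for s
  proof -
    have "s \<in> U" using S(2) ideal_span_base[OF that] by simp
    then show ?thesis unfolding U_def by blast
  qed
  then obtain f where f: "\<And>s. s \<in> S \<Longrightarrow> s \<in> I (f s)" by metis
  define N where "N = Max (insert 0 (f ` S))"
  have "S \<subseteq> I N"
  proof
    fix s assume "s \<in> S"
    then have "f s \<le> N" using S(1) N_def by simp
    then show "s \<in> I N" using f[OF \<open>s \<in> S\<close>] le[of "f s" N] by blast
  qed
  then have "ideal_span S \<subseteq> I N" by (rule ideal_span_sub[OF I])
  moreover have "I (Suc N) \<subseteq> U" unfolding U_def by blast
  ultimately show ?thesis using S(2) by blast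
qed

lemma noeth_max:
  assumes "noetherian_ring TYPE('a::comm_ring_1)"
    and "\<And>J. J \<in> \<F> \<Longrightarrow> ring_ideal (J :: 'a set)" and "I0 \<in> \<F>"
  shows "\<exists>M\<in>\<F>. \<forall>J\<in>\<F>. M \<subseteq> J \<longrightarrow> J = M"
proof (rule ccontr)
  assume "\<not> ?thesis"
  then have "\<forall>M\<in>\<F>. \<exists>J\<in>\<F>. M \<subset> J" by blast
  then obtain f where f: "\<forall>M\<in>\<F>. f M \<in> \<F> \<and> M \<subset> f M" by metis
  define I where "I n = (f ^^ n) I0" for n
  have inF: "I n \<in> \<F>" for n by (induction n) (auto simp: I_def f assms(3))
  have "I n \<subset> I (Suc n)" for n using f inF by (simp add: I_def)
  moreover obtain N where "I (Suc N) \<subseteq> I N"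
    using noeth_acc[OF assms(1), of I] inF assms(2) calculation by blast
  ultimately show False by (metis psubset_eq order.antisym)
qed

lemma max_is_prime:
  assumes "maximal_ideal (M::'a::comm_ring_1 set)" shows "prime_ideal M"
proof -
  have iM: "ring_ideal M" "M \<noteq> UNIV" using assms by (auto simp: maximal_ideal_def)
  have "y \<in> M" if xyM: "x * y \<in> M" "x \<notin> M" for x y
  proof -
    define J where "J = {m + r * x | m r. m \<in> M}"
    have "ring_ideal J" unfolding ring_ideal_def J_def
    proof (intro conjI ballI allI)
      show "0 \<in> {m + r * x |m r. m \<in> M}" using ideal_0[OF iM(1)]
        by (intro CollectI exI[of _ 0] exI[of _ 0]) simp
    next
      fix a b assume "a \<in> {m + r * x |m r. m \<in> M}" "b \<in> {m + r * x |m r. m \<in> M}"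
      then obtain m r m' r' where "a = m + r * x" "b = m' + r' * x" "m \<in> M" "m' \<in> M" by blast
      then show "a + b \<in> {m + r * x |m r. m \<in> M}"
        by (intro CollectI exI[of _ "m + m'"] exI[of _ "r + r'"]) (auto simp: algebra_simps ideal_add[OF iM(1)])
    next
      fix c a assume "a \<in> {m + r * x |m r. m \<in> M}"
      then obtain m r where "a = m + r * x" "m \<in> M" by blast
      then show "c * a \<in> {m + r * x |m r. m \<in> M}"
        by (intro CollectI exI[of _ "c * m"] exI[of _ "c * r"]) (auto simp: algebra_simps ideal_mult[OF iM(1)])
    qed
    moreover have "M \<subseteq> J" unfolding J_def
    proof
      fix z assume "z \<in> M" then show "z \<in> {m + r * x |m r. m \<in> M}" by (intro CollectI exI[of _ z] exI[of _ 0]) simp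
    qed
    ultimately have JJ: "J = M \<or> J = UNIV" using assms unfolding maximal_ideal_def by blast
    have "x \<in> J" unfolding J_def using ideal_0[OF iM(1)] by (intro CollectI exI[of _ 0] exI[of _ 1]) simp
    then have "J = UNIV" using JJ xyM(2) by blast
    then obtain m r where "1 = m + r * x" "m \<in> M" unfolding J_def by blast
    then have "y = (m + r * x) * y" by simp
    then have "y = m * y + r * (x * y)" by (simp add: distrib_right mult.assoc)
    then show "y \<in> M" using ideal_add[OF iM(1) ideal_mult2[OF iM(1) \<open>m \<in> M\<close>, of y] ideal_mult[OF iM(1) xyM(1), of r]] by simp
  qed
  then show ?thesis using iM unfolding prime_ideal_def by blast
qed

lemma exists_maximal:
  assumes "noetherian_ring TYPE('a::comm_ring_1)" "ring_ideal (I::'a set)" "1 \<notin> I"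
  shows "\<exists>M. maximal_ideal M \<and> I \<subseteq> M"
proof -
  define \<F> where "\<F> = {J. ring_ideal J \<and> I \<subseteq> J \<and> (1::'a) \<notin> J}"
  obtain M where M: "M \<in> \<F>" "\<forall>J\<in>\<F>. M \<subseteq> J \<longrightarrow> J = M"
    using noeth_max[OF assms(1), of \<F> I] assms unfolding \<F>_def by blast
  have "maximal_ideal M" unfolding maximal_ideal_def
  proof (intro conjI allI impI)
    show "ring_ideal M" "M \<noteq> UNIV" using M(1) by (auto simp: \<F>_def)
  next
    fix J assume J: "ring_ideal J \<and> M \<subseteq> J"
    show "J = M \<or> J = UNIV"
    proof (cases "1 \<in> J")
      case True then show ?thesis using ideal_UNIV1 J by blast
    next
      case False then have "J \<in> \<F>" using J M(1) by (auto simp: \<F>_def)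
      then show ?thesis using M(2) J by blast
    qed
  qed
  then show ?thesis using M(1) \<F>_def by blast
qed


locale dd = fixes T :: "'a::idom itself" assumes ded: "dedekind_domain T"
begin

lemma noeth: "noetherian_ring TYPE('a)"
  using ded by (simp add: dedekind_domain_def noetherian_ring_def)

lemma dim1: "prime_ideal P \<Longrightarrow> P \<noteq> {0} \<Longrightarrow> maximal_ideal (P::'a set)"
  using ded unfolding dedekind_domain_def dim_le_one_def by blast

lemma intclosed: "lead_coeff (p::'a poly) = 1 \<Longrightarrow> poly (map_poly to_fract p) x = 0 \<Longrightarrow> x \<in> range to_fract"
  using ded unfolding dedekind_domain_def integrally_closed_def by blast

end

lemma to_fract_power [simp]: "to_fract (x ^ n) = to_fract (x::'a::idom) ^ n"
  by (induction n) auto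

lemma fract_poly_sum: "map_poly to_fract (\<Sum>i\<in>A. f i) = (\<Sum>i\<in>A. map_poly to_fract (f i :: 'a::idom poly))"
  by (induction A rule: infinite_finite_induct) auto

locale dq = dd T for T :: "'a::idom itself" + fixes Q :: "'a set" assumes Qpd: "prime_divisor Q"
begin

lemma Qprime: "prime_ideal Q" and Qnz: "Q \<noteq> {0}" using Qpd by (auto simp: prime_divisor_def)
lemma Qideal: "ring_ideal Q" using Qprime by (simp add: prime_ideal_def)
lemma QUNIV: "Q \<noteq> UNIV" using Qprime by (simp add: prime_ideal_def)
lemma Qmax: "maximal_ideal Q" using dim1 Qprime Qnz by blast
lemma one_notQ: "1 \<notin> Q" using ideal_UNIV1[OF Qideal] QUNIV by blast
lemma zero_Q: "0 \<in> Q" using ideal_0[OF Qideal] .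
lemma notQ_mult: "s \<notin> Q \<Longrightarrow> t \<notin> Q \<Longrightarrow> s * t \<notin> Q" using Qprime by (auto simp: prime_ideal_def)
lemma notQ_nz: "s \<notin> Q \<Longrightarrow> s \<noteq> 0" using zero_Q by blast
lemma Q_mult: "q \<in> Q \<Longrightarrow> r * q \<in> Q" using ideal_mult[OF Qideal] .
lemma Q_mult2: "q \<in> Q \<Longrightarrow> q * r \<in> Q" using ideal_mult2[OF Qideal] .
lemma Q_add: "q \<in> Q \<Longrightarrow> q' \<in> Q \<Longrightarrow> q + q' \<in> Q" using ideal_add[OF Qideal] .
lemma Q_prime: "s * t \<in> Q \<Longrightarrow> s \<in> Q \<or> t \<in> Q" using Qprime by (auto simp: prime_ideal_def)
lemma notQ_pow: "s \<notin> Q \<Longrightarrow> s ^ n \<notin> Q" by (induction n) (auto simp: one_notQ notQ_mult)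

definition "Rl = {to_fract x / to_fract s | x s. s \<notin> Q}"
definition "Rm = {to_fract x / to_fract s | x s. x \<in> Q \<and> s \<notin> Q}"

lemma Rl_to: "to_fract x \<in> Rl"
  unfolding Rl_def by (rule CollectI, rule exI[of _ x], rule exI[of _ 1]) (simp add: one_notQ)
lemma Rm_to: "x \<in> Q \<Longrightarrow> to_fract x \<in> Rm"
  unfolding Rm_def by (rule CollectI, rule exI[of _ x], rule exI[of _ 1]) (simp add: one_notQ)
lemma Rm_Rl: "Rm \<subseteq> Rl" unfolding Rm_def Rl_def by blast
lemma Rl_0: "0 \<in> Rl" using Rl_to[of 0] by simp
lemma Rl_add: assumes "r \<in> Rl" "r' \<in> Rl" shows "r + r' \<in> Rl"
proof -
  obtain x s x' s' where 1: "r = to_fract x / to_fract s" "s \<notin> Q" "r' = to_fract x' / to_fract s'" "s' \<notin> Q"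
    using assms unfolding Rl_def by blast
  have "r + r' = to_fract (x * s' + x' * s) / to_fract (s * s')"
    using 1 notQ_nz[OF 1(2)] notQ_nz[OF 1(4)] by (simp add: field_simps)
  then show ?thesis unfolding Rl_def using notQ_mult[OF 1(2,4)] by blast
qed
lemma Rl_mult: assumes "r \<in> Rl" "r' \<in> Rl" shows "r * r' \<in> Rl"
proof -
  obtain x s x' s' where 1: "r = to_fract x / to_fract s" "s \<notin> Q" "r' = to_fract x' / to_fract s'" "s' \<notin> Q"
    using assms unfolding Rl_def by blast
  have "r * r' = to_fract (x * x') / to_fract (s * s')"
    using 1 by simp
  then show ?thesis unfolding Rl_def using notQ_mult[OF 1(2,4)] by blast
qed
lemma Rl_div: assumes "r \<in> Rl" "t \<notin> Q" shows "r / to_fract t \<in> Rl"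
proof -
  obtain x s where 1: "r = to_fract x / to_fract s" "s \<notin> Q"
    using assms unfolding Rl_def by blast
  have "r / to_fract t = to_fract x / to_fract (s * t)" using 1 by simp
  then show ?thesis unfolding Rl_def using notQ_mult[OF 1(2) assms(2)] by blast
qed

lemma common_denom:
  "(\<forall>i\<le>(N::nat). r i \<in> Rl) \<Longrightarrow> \<exists>\<sigma> c. \<sigma> \<notin> Q \<and> (\<forall>i\<le>N. r i = to_fract (c i) / to_fract \<sigma>)"
proof (induction N)
  case 0
  then obtain x s where "r 0 = to_fract x / to_fract s" "s \<notin> Q" unfolding Rl_def by auto
  then show ?case by (intro exI[of _ s] exI[of _ "\<lambda>_. x"]) auto
next
  case (Suc N)
  then obtain \<sigma> c where 1: "\<sigma> \<notin> Q" "\<forall>i\<le>N. r i = to_fract (c i) / to_fract \<sigma>" by auto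
  obtain x s where 2: "r (Suc N) = to_fract x / to_fract s" "s \<notin> Q" using Suc.prems unfolding Rl_def by auto
  define c' where "c' i = (if i \<le> N then c i * s else x * \<sigma>)" for i
  have "\<forall>i\<le>Suc N. r i = to_fract (c' i) / to_fract (\<sigma> * s)"
  proof (intro allI impI)
    fix i assume "i \<le> Suc N"
    then consider "i \<le> N" | "i = Suc N" by linarith
    then show "r i = to_fract (c' i) / to_fract (\<sigma> * s)"
    proof cases
      case 1 then show ?thesis using \<open>\<forall>i\<le>N. _\<close> notQ_nz[OF 2(2)] by (simp add: c'_def)
    next
      case 2 then show ?thesis using \<open>r (Suc N) = _\<close> notQ_nz[OF \<open>\<sigma> \<notin> Q\<close>] by (simp add: c'_def)
    qed
  qed
  then show ?case using notQ_mult[OF 1(1) 2(2)] by blast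
qed

lemma loc_integral:
  assumes a: "a \<in> Q" "a \<noteq> 0" and y: "\<forall>x\<in>Rm. y * x \<in> Rm"
  shows "y \<in> Rl"
proof -
  have aR: "to_fract a * y ^ k \<in> Rm" for k
  proof (induction k)
    case 0 then show ?case using Rm_to[OF a(1)] by simp
  next
    case (Suc k)
    have eq: "to_fract a * y ^ Suc k = y * (to_fract a * y ^ k)" by (simp add: algebra_simps)
    show ?case unfolding eq using y Suc by blast
  qed
  define J where "J n = {x. \<exists>r. (\<forall>i\<le>n. r i \<in> Rl) \<and> to_fract x = to_fract a * (\<Sum>i\<le>n. r i * y ^ i)}" for n
  have Jid: "ring_ideal (J n)" for n unfolding ring_ideal_def
  proof (intro conjI ballI allI)
    show "0 \<in> J n" unfolding J_def using Rl_0 by (intro CollectI exI[of _ "\<lambda>_. 0"]) simp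
  next
    fix x x' assume "x \<in> J n" "x' \<in> J n"
    then obtain r r' where "\<forall>i\<le>n. r i \<in> Rl" "to_fract x = to_fract a * (\<Sum>i\<le>n. r i * y ^ i)"
      "\<forall>i\<le>n. r' i \<in> Rl" "to_fract x' = to_fract a * (\<Sum>i\<le>n. r' i * y ^ i)" unfolding J_def by blast
    then show "x + x' \<in> J n" unfolding J_def
      by (intro CollectI exI[of _ "\<lambda>i. r i + r' i"]) (simp add: Rl_add distrib_left distrib_right sum.distrib)
  next
    fix c x assume "x \<in> J n"
    then obtain r where "\<forall>i\<le>n. r i \<in> Rl" "to_fract x = to_fract a * (\<Sum>i\<le>n. r i * y ^ i)"
      unfolding J_def by blast
    then show "c * x \<in> J n" unfolding J_def
      by (intro CollectI exI[of _ "\<lambda>i. to_fract c * r i"]) (simp add: Rl_mult Rl_to sum_distrib_left algebra_simps)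
  qed
  have Jmono: "J n \<subseteq> J (Suc n)" for n
  proof
    fix x assume "x \<in> J n"
    then obtain r where r: "\<forall>i\<le>n. r i \<in> Rl" "to_fract x = to_fract a * (\<Sum>i\<le>n. r i * y ^ i)"
      unfolding J_def by blast
    define r' where "r' i = (if i \<le> n then r i else 0)" for i
    have "(\<Sum>i\<le>Suc n. r' i * y ^ i) = (\<Sum>i\<le>n. r i * y ^ i)"
      by (simp add: r'_def)
    then show "x \<in> J (Suc n)" unfolding J_def using r Rl_0
      by (intro CollectI exI[of _ r']) (simp add: r'_def)
  qed
  obtain N where N: "J (Suc N) \<subseteq> J N" using noeth_acc[OF noeth, of J] Jid Jmono by blast
  have "to_fract a * y ^ Suc N \<in> Rl" using aR Rm_Rl by blast
  then obtain x s where xs: "to_fract a * y ^ Suc N = to_fract x / to_fract s" "s \<notin> Q"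
    unfolding Rl_def by blast
  have snz: "to_fract s \<noteq> 0" using notQ_nz[OF xs(2)] by simp
  have "x \<in> J (Suc N)" unfolding J_def
  proof (intro CollectI exI[of _ "\<lambda>i. if i = Suc N then to_fract s else 0"] conjI)
    show "\<forall>i\<le>Suc N. (if i = Suc N then to_fract s else 0) \<in> Rl" using Rl_0 Rl_to by simp
    have "(\<Sum>i\<le>Suc N. (if i = Suc N then to_fract s else 0) * y ^ i) = to_fract s * y ^ Suc N"
      by (simp add: sum.atMost_Suc)
    then show "to_fract x = to_fract a * (\<Sum>i\<le>Suc N. (if i = Suc N then to_fract s else 0) * y ^ i)"
      using xs snz by (simp add: field_simps)
  qed
  with N have "x \<in> J N" by blast
  then obtain r where r: "\<forall>i\<le>N. r i \<in> Rl" "to_fract x = to_fract a * (\<Sum>i\<le>N. r i * y ^ i)"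
    unfolding J_def by blast
  have "to_fract a * (to_fract s * y ^ Suc N) = to_fract a * (\<Sum>i\<le>N. r i * y ^ i)"
    using xs snz r(2) by (simp add: field_simps)
  then have "to_fract s * y ^ Suc N = (\<Sum>i\<le>N. r i * y ^ i)" using a(2) by simp
  then have yN: "y ^ Suc N = (\<Sum>i\<le>N. (r i / to_fract s) * y ^ i)"
    using snz by (simp add: sum_divide_distrib[symmetric] field_simps)
  have "\<forall>i\<le>N. r i / to_fract s \<in> Rl" using r(1) Rl_div xs(2) by blast
  then obtain \<sigma> c where sc: "\<sigma> \<notin> Q" "\<forall>i\<le>N. r i / to_fract s = to_fract (c i) / to_fract \<sigma>"
    using common_denom[of N "\<lambda>i. r i / to_fract s"] by blast
  have signz: "to_fract \<sigma> \<noteq> 0" using notQ_nz[OF sc(1)] by simp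
  have yN2: "y ^ Suc N = (\<Sum>i\<le>N. (to_fract (c i) / to_fract \<sigma>) * y ^ i)"
    using yN sc(2) by simp
  define z where "z = to_fract \<sigma> * y"
  define p where "p = monom 1 (Suc N) - (\<Sum>i\<le>N. monom (c i * \<sigma> ^ (N - i)) i)"
  have "z ^ Suc N = to_fract \<sigma> ^ Suc N * y ^ Suc N" by (simp add: z_def power_mult_distrib)
  also have "\<dots> = (\<Sum>i\<le>N. to_fract \<sigma> ^ Suc N * ((to_fract (c i) / to_fract \<sigma>) * y ^ i))"
    using yN2 by (simp add: sum_distrib_left)
  also have "\<dots> = (\<Sum>i\<le>N. to_fract (c i * \<sigma> ^ (N - i)) * z ^ i)"
  proof (rule sum.cong)
    fix i assume "i \<in> {..N}"
    then have "N = (N - i) + i" by simp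
    then have "to_fract \<sigma> ^ N = to_fract \<sigma> ^ (N - i) * to_fract \<sigma> ^ i" by (metis power_add)
    then show "to_fract \<sigma> ^ Suc N * ((to_fract (c i) / to_fract \<sigma>) * y ^ i) = to_fract (c i * \<sigma> ^ (N - i)) * z ^ i"
      using signz by (simp add: z_def power_mult_distrib field_simps)
  qed simp
  finally have zeq: "z ^ Suc N = (\<Sum>i\<le>N. to_fract (c i * \<sigma> ^ (N - i)) * z ^ i)" .
  have "poly (map_poly to_fract p) z = z ^ Suc N - (\<Sum>i\<le>N. to_fract (c i * \<sigma> ^ (N - i)) * z ^ i)"
    unfolding p_def by (simp add: fract_poly_sum map_poly_monom poly_sum poly_monom)
  then have p0: "poly (map_poly to_fract p) z = 0" using zeq by simp
  have cN: "coeff p (Suc N) = 1" unfolding p_def by (simp add: coeff_sum)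
  have "degree p \<le> Suc N" unfolding p_def
    by (intro degree_diff_le degree_monom_le degree_sum_le) (auto intro: order.trans[OF degree_monom_le])
  moreover have "Suc N \<le> degree p" using cN by (intro le_degree) simp
  ultimately have "degree p = Suc N" by simp
  then have "lead_coeff p = 1" using cN by simp
  then have "z \<in> range to_fract" using intclosed p0 by blast
  then obtain w where "z = to_fract w" by blast
  then have "y = to_fract w / to_fract \<sigma>" using signz by (simp add: z_def field_simps)
  then show ?thesis unfolding Rl_def using sc(1) by blast
qed

lemma L1: "\<exists>\<pi>\<in>Q. \<forall>q\<in>Q. \<exists>s c. s \<notin> Q \<and> s * q = \<pi> * c"
proof -
  obtain a where a: "a \<in> Q" "a \<noteq> 0" using Qnz zero_Q by blast
  define C where "C b = {r. \<exists>s d. s \<notin> Q \<and> s * r * b = a * d}" for b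
  have Cid: "ring_ideal (C b)" for b unfolding ring_ideal_def
  proof (intro conjI ballI allI)
    show "0 \<in> C b" unfolding C_def by (intro CollectI exI[of _ 1] exI[of _ 0]) (simp add: one_notQ)
  next
    fix x y assume "x \<in> C b" "y \<in> C b"
    then obtain s d s' d' where h: "s \<notin> Q" "s * x * b = a * d" "s' \<notin> Q" "s' * y * b = a * d'"
      unfolding C_def by blast
    have "s * s' * (x + y) * b = s' * (s * x * b) + s * (s' * y * b)" by (simp add: algebra_simps)
    also have "\<dots> = a * (s' * d + s * d')" using h by (simp add: algebra_simps)
    finally show "x + y \<in> C b" unfolding C_def using notQ_mult[OF h(1,3)] by blast
  next
    fix r x assume "x \<in> C b"
    then obtain s d where h: "s \<notin> Q" "s * x * b = a * d" unfolding C_def by blast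
    have "s * (r * x) * b = a * (r * d)" using h by (metis mult.assoc mult.left_commute)
    then show "r * x \<in> C b" unfolding C_def using h(1) by blast
  qed
  have C1: "1 \<notin> C 1"
  proof
    assume "1 \<in> C 1"
    then obtain s d where "s \<notin> Q" "s * 1 * 1 = a * d" unfolding C_def by blast
    then show False using Q_mult2[OF a(1), of d] by simp
  qed
  define F where "F = {C b | b. 1 \<notin> C b}"
  obtain M where M: "M \<in> F" "\<forall>J\<in>F. M \<subseteq> J \<longrightarrow> J = M"
    using noeth_max[OF noeth, of F "C 1"] Cid C1 unfolding F_def by blast
  then obtain b where Mb: "M = C b" "1 \<notin> C b" unfolding F_def by blast
  have bnz: "b \<noteq> 0"
  proof
    assume "b = 0"
    then have "1 \<in> C b" unfolding C_def by (intro CollectI exI[of _ 1] exI[of _ 0]) (simp add: one_notQ)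
    then show False using Mb by blast
  qed
  have CbQ: "C b \<subseteq> Q"
  proof
    fix r assume "r \<in> C b"
    then obtain s d where h: "s \<notin> Q" "s * r * b = a * d" unfolding C_def by blast
    show "r \<in> Q"
    proof (rule ccontr)
      assume "r \<notin> Q"
      then have "s * r \<notin> Q" using notQ_mult h(1) by blast
      moreover have "(s * r) * 1 * b = a * d" using h by simp
      ultimately have "1 \<in> C b" unfolding C_def by blast
      then show False using Mb by blast
    qed
  qed
  have Cprime: "prime_ideal (C b)" unfolding prime_ideal_def
  proof (intro conjI allI impI)
    show "ring_ideal (C b)" by (rule Cid)
    show "C b \<noteq> UNIV" using Mb by blast
  next
    fix x y assume xy: "x * y \<in> C b"
    show "x \<in> C b \<or> y \<in> C b"
    proof (cases "x \<in> C b")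
      case True then show ?thesis by blast
    next
      case False
      note xn = False
      have sub: "C b \<subseteq> C (x * b)"
      proof
        fix t assume "t \<in> C b"
        then obtain s d where h: "s \<notin> Q" "s * t * b = a * d" unfolding C_def by blast
        have "s * t * (x * b) = a * (d * x)" using h by (metis mult.assoc mult.commute)
        then show "t \<in> C (x * b)" unfolding C_def using h(1) by blast
      qed
      have "1 \<notin> C (x * b)"
      proof
        assume "1 \<in> C (x * b)"
        then obtain s d where h: "s \<notin> Q" "s * 1 * (x * b) = a * d" unfolding C_def by blast
        then have "s * x * b = a * d" by (simp add: mult.assoc)
        then have "x \<in> C b" unfolding C_def using h(1) by blast
        then show False using xn by blast
      qed
      then have "C (x * b) \<in> F" unfolding F_def by blast
      then have eq: "C (x * b) = C b" using M(2) sub Mb(1) by blast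
      obtain s d where h: "s \<notin> Q" "s * (x * y) * b = a * d" using xy unfolding C_def by blast
      have "s * y * (x * b) = a * d" using h(2) by (simp add: algebra_simps)
      then have "y \<in> C (x * b)" unfolding C_def using h(1) by blast
      then show ?thesis using eq by simp
    qed
  qed
  have "a \<in> C b" unfolding C_def by (intro CollectI exI[of _ 1] exI[of _ b]) (simp add: one_notQ)
  then have "C b \<noteq> {0}" using a(2) by blast
  then have "maximal_ideal (C b)" using dim1 Cprime by blast
  then have "Q = C b \<or> Q = UNIV" using CbQ Qideal unfolding maximal_ideal_def by blast
  then have QC: "Q = C b" using QUNIV by blast
  show ?thesis
  proof (cases "\<exists>q s d. q \<in> Q \<and> s \<notin> Q \<and> s * q * b = a * d \<and> d \<notin> Q")
    case True
    then obtain q s d where h: "q \<in> Q" "s \<notin> Q" "s * q * b = a * d" "d \<notin> Q" by blast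
    have "\<forall>q'\<in>Q. \<exists>s c. s \<notin> Q \<and> s * q' = q * c"
    proof
      fix q' assume "q' \<in> Q"
      then obtain s' d' where h': "s' \<notin> Q" "s' * q' * b = a * d'" using QC unfolding C_def by blast
      have "b * (d * s' * q') = d * (s' * q' * b)" by (simp add: algebra_simps)
      also have "\<dots> = d' * (s * q * b)" using h(3) h'(2) by (simp add: algebra_simps)
      also have "\<dots> = b * (q * (d' * s))" by (simp add: algebra_simps)
      finally have "d * s' * q' = q * (d' * s)" using bnz by simp
      then show "\<exists>s c. s \<notin> Q \<and> s * q' = q * c" using notQ_mult[OF h(4) h'(1)] by blast
    qed
    then show ?thesis using h(1) by blast
  next
    case False
    define y where "y = to_fract b / to_fract a"
    have "\<forall>x\<in>Rm. y * x \<in> Rm"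
    proof
      fix x assume "x \<in> Rm"
      then obtain u t where ut: "x = to_fract u / to_fract t" "u \<in> Q" "t \<notin> Q" unfolding Rm_def by blast
      then obtain \<sigma> d where h: "\<sigma> \<notin> Q" "\<sigma> * u * b = a * d" using QC unfolding C_def by blast
      have dQ: "d \<in> Q" using False h ut(2) by blast
      have "y * x = to_fract d / to_fract (\<sigma> * t)"
      proof -
        have "to_fract (\<sigma> * u * b) = to_fract (a * d)" using h(2) by simp
        then have e: "to_fract \<sigma> * to_fract u * to_fract b = to_fract a * to_fract d" by simp
        show ?thesis unfolding y_def ut(1) using notQ_nz[OF h(1)] notQ_nz[OF ut(3)] a(2) e
          by (simp add: field_simps)
      qed
      then show "y * x \<in> Rm" unfolding Rm_def using dQ notQ_mult[OF h(1) ut(3)] by blast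
    qed
    then have "y \<in> Rl" using loc_integral a by blast
    then obtain w \<sigma> where w: "y = to_fract w / to_fract \<sigma>" "\<sigma> \<notin> Q" unfolding Rl_def by blast
    then have "to_fract (\<sigma> * b) = to_fract (a * w)" using notQ_nz[OF w(2)] a(2)
      by (simp add: y_def field_simps)
    then have "\<sigma> * b = a * w" by (simp only: to_fract_eq_iff)
    then have "\<sigma> * 1 * b = a * w" by simp
    then have "1 \<in> C b" unfolding C_def using w(2) by blast
    then show ?thesis using Mb by blast
  qed
qed

end

context dq begin

definition "uf = (SOME \<pi>. \<pi> \<in> Q \<and> (\<forall>q\<in>Q. \<exists>s c. s \<notin> Q \<and> s * q = \<pi> * c))"

lemma uf: "uf \<in> Q" "\<forall>q\<in>Q. \<exists>s c. s \<notin> Q \<and> s * q = uf * c"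
proof -
  have "\<exists>\<pi>. \<pi> \<in> Q \<and> (\<forall>q\<in>Q. \<exists>s c. s \<notin> Q \<and> s * q = \<pi> * c)" using L1 by blast
  then have h: "uf \<in> Q \<and> (\<forall>q\<in>Q. \<exists>s c. s \<notin> Q \<and> s * q = uf * c)"
    unfolding uf_def by (rule someI_ex)
  then show "uf \<in> Q" "\<forall>q\<in>Q. \<exists>s c. s \<notin> Q \<and> s * q = uf * c" by blast+
qed

lemma uf_loc: "q \<in> Q \<Longrightarrow> \<exists>s c. s \<notin> Q \<and> s * q = uf * c" using uf(2) by blast

lemma uf_nz: "uf \<noteq> 0"
proof
  assume "uf = 0"
  obtain q where "q \<in> Q" "q \<noteq> 0" using Qnz zero_Q by blast
  then obtain s c where "s \<notin> Q" "s * q = uf * c" using uf_loc by blast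
  then show False using \<open>uf = 0\<close> \<open>q \<noteq> 0\<close> notQ_nz by simp
qed

lemma uf_pow_Q: "n > 0 \<Longrightarrow> uf ^ n * c \<in> Q"
  using uf(1) by (cases n) (auto intro: Q_mult2 Q_mult simp: mult.assoc)

lemma L2: assumes "a \<noteq> 0" shows "\<exists>n s t. s \<notin> Q \<and> t \<notin> Q \<and> s * a = uf ^ n * t"
proof -
  define P where "P n = (\<exists>s c. s \<notin> Q \<and> s * a = uf ^ n * c)" for n
  have nP: "\<not> (\<forall>n. P n)"
  proof
    assume "\<forall>n. P n"
    then have "\<forall>n. \<exists>s c. s \<notin> Q \<and> s * a = uf ^ n * c" unfolding P_def by blast
    then obtain s c where sc: "\<And>n. s n \<notin> Q" "\<And>n. s n * a = uf ^ n * c n" by metis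
    define I where "I n = {x. \<exists>\<sigma> d. \<sigma> \<notin> Q \<and> \<sigma> * x = c n * d}" for n
    have Iid: "ring_ideal (I n)" for n unfolding ring_ideal_def
    proof (intro conjI ballI allI)
      show "0 \<in> I n" unfolding I_def by (intro CollectI exI[of _ 1] exI[of _ 0]) (simp add: one_notQ)
    next
      fix x y assume "x \<in> I n" "y \<in> I n"
      then obtain \<sigma> d \<sigma>' d' where h: "\<sigma> \<notin> Q" "\<sigma> * x = c n * d" "\<sigma>' \<notin> Q" "\<sigma>' * y = c n * d'"
        unfolding I_def by blast
      have "\<sigma> * \<sigma>' * (x + y) = c n * (\<sigma>' * d + \<sigma> * d')"
        using h by (simp add: algebra_simps)
      then show "x + y \<in> I n" unfolding I_def using notQ_mult[OF h(1,3)] by blast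
    next
      fix r x assume "x \<in> I n"
      then obtain \<sigma> d where h: "\<sigma> \<notin> Q" "\<sigma> * x = c n * d" unfolding I_def by blast
      have "\<sigma> * (r * x) = c n * (r * d)" using h by (metis mult.assoc mult.left_commute)
      then show "r * x \<in> I n" unfolding I_def using h(1) by blast
    qed
    have key: "s (Suc n) * c n = uf * s n * c (Suc n)" for n
    proof -
      have "uf ^ n * (s (Suc n) * c n) = s (Suc n) * (s n * a)" using sc(2)[of n] by (simp add: algebra_simps)
      also have "\<dots> = s n * (s (Suc n) * a)" by (simp add: algebra_simps)
      also have "\<dots> = uf ^ n * (uf * s n * c (Suc n))" using sc(2)[of "Suc n"] by (simp add: algebra_simps)
      finally show ?thesis using uf_nz by simp
    qed
    have Imono: "I n \<subseteq> I (Suc n)" for n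
    proof
      fix x assume "x \<in> I n"
      then obtain \<sigma> d where h: "\<sigma> \<notin> Q" "\<sigma> * x = c n * d" unfolding I_def by blast
      have "(s (Suc n) * \<sigma>) * x = c (Suc n) * (uf * s n * d)"
        using h(2) key[of n] by (metis mult.assoc mult.commute)
      then show "x \<in> I (Suc n)" unfolding I_def using notQ_mult[OF sc(1) h(1)] by blast
    qed
    obtain N where N: "I (Suc N) \<subseteq> I N" using noeth_acc[OF noeth, of I] Iid Imono by blast
    have "c (Suc N) \<in> I (Suc N)" unfolding I_def by (intro CollectI exI[of _ 1] exI[of _ 1]) (simp add: one_notQ)
    then have "c (Suc N) \<in> I N" using N by blast
    then obtain \<sigma> d where h: "\<sigma> \<notin> Q" "\<sigma> * c (Suc N) = c N * d" unfolding I_def by blast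
    have cN: "c N \<noteq> 0" using sc(2)[of N] sc(1)[of N] notQ_nz assms by auto
    have "c N * (\<sigma> * s (Suc N)) = \<sigma> * (s (Suc N) * c N)" by (simp add: algebra_simps)
    also have "\<dots> = uf * s N * (\<sigma> * c (Suc N))" using key[of N] by (simp add: algebra_simps)
    also have "\<dots> = c N * (uf * (s N * d))" using h(2) by (simp add: algebra_simps)
    finally have "\<sigma> * s (Suc N) = uf * (s N * d)" using cN by simp
    moreover have "uf * (s N * d) \<in> Q" using uf(1) Q_mult2 by blast
    ultimately show False using notQ_mult[OF h(1) sc(1)[of "Suc N"]] by simp
  qed
  have P0: "P 0" unfolding P_def by (intro exI[of _ 1] exI[of _ a]) (simp add: one_notQ)
  obtain m where "\<not> P m" using nP by blast
  define k where "k = (LEAST m. \<not> P m) - 1"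
  have "\<not> P (LEAST m. \<not> P m)" using \<open>\<not> P m\<close> by (rule LeastI)
  then have L0: "(LEAST m. \<not> P m) \<noteq> 0" using P0 by (metis)
  then have Sk: "Suc k = (LEAST m. \<not> P m)" unfolding k_def by simp
  have Pk: "P k" using not_less_Least[of k "\<lambda>m. \<not> P m"] Sk by simp
  have nPk: "\<not> P (Suc k)" using \<open>\<not> P (LEAST m. \<not> P m)\<close> Sk by simp
  obtain s c where sc: "s \<notin> Q" "s * a = uf ^ k * c" using Pk unfolding P_def by blast
  have "c \<notin> Q"
  proof
    assume "c \<in> Q"
    then obtain s' c' where h: "s' \<notin> Q" "s' * c = uf * c'" using uf_loc by blast
    have "(s' * s) * a = uf ^ Suc k * c'" using sc(2) h(2) by (metis mult.assoc mult.commute power_Suc)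
    then have "P (Suc k)" unfolding P_def using notQ_mult[OF h(1) sc(1)] by blast
    then show False using nPk by blast
  qed
  then show ?thesis using sc by blast
qed

lemma prod_loc: "(\<forall>i<n. x i \<in> Q) \<Longrightarrow> \<exists>\<sigma> d. \<sigma> \<notin> Q \<and> \<sigma> * (\<Prod>i<n. x i) = uf ^ n * d"
proof (induction n)
  case 0 then show ?case by (intro exI[of _ 1]) (simp add: one_notQ)
next
  case (Suc n)
  then obtain \<sigma> d where h: "\<sigma> \<notin> Q" "\<sigma> * (\<Prod>i<n. x i) = uf ^ n * d" by auto
  obtain \<sigma>' c' where h': "\<sigma>' \<notin> Q" "\<sigma>' * x n = uf * c'" using uf_loc Suc.prems by blast
  have "(\<sigma> * \<sigma>') * (\<Prod>i<Suc n. x i) = (\<sigma> * (\<Prod>i<n. x i)) * (\<sigma>' * x n)" by (simp add: algebra_simps)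
  also have "\<dots> = uf ^ Suc n * (d * c')" using h(2) h'(2) by (simp add: algebra_simps)
  finally show ?case using notQ_mult[OF h(1) h'(1)] by blast
qed

lemma idealpow_loc: assumes "x \<in> ideal_pow Q n" shows "\<exists>\<sigma> d. \<sigma> \<notin> Q \<and> \<sigma> * x = uf ^ n * d"
proof -
  define L where "L = {x. \<exists>\<sigma> d. \<sigma> \<notin> Q \<and> \<sigma> * x = uf ^ n * d}"
  have "ring_ideal L" unfolding ring_ideal_def
  proof (intro conjI ballI allI)
    show "0 \<in> L" unfolding L_def by (intro CollectI exI[of _ 1] exI[of _ 0]) (simp add: one_notQ)
  next
    fix x y assume "x \<in> L" "y \<in> L"
    then obtain \<sigma> d \<sigma>' d' where h: "\<sigma> \<notin> Q" "\<sigma> * x = uf ^ n * d" "\<sigma>' \<notin> Q" "\<sigma>' * y = uf ^ n * d'"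
      unfolding L_def by blast
    have "\<sigma> * \<sigma>' * (x + y) = \<sigma>' * (\<sigma> * x) + \<sigma> * (\<sigma>' * y)" by (simp add: algebra_simps)
    also have "\<dots> = uf ^ n * (\<sigma>' * d + \<sigma> * d')" unfolding h(2,4) by (simp add: algebra_simps)
    finally show "x + y \<in> L" unfolding L_def using notQ_mult[OF h(1,3)] by blast
  next
    fix r x assume "x \<in> L"
    then obtain \<sigma> d where h: "\<sigma> \<notin> Q" "\<sigma> * x = uf ^ n * d" unfolding L_def by blast
    have "\<sigma> * (r * x) = uf ^ n * (r * d)" using h by (metis mult.assoc mult.left_commute)
    then show "r * x \<in> L" unfolding L_def using h(1) by blast
  qed
  moreover have "{(\<Prod>i<n. x i) | x. \<forall>i<n. x i \<in> Q} \<subseteq> L"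
  proof
    fix z assume "z \<in> {(\<Prod>i<n. x i) | x. \<forall>i<n. x i \<in> Q}"
    then obtain x where "z = (\<Prod>i<n. x i)" "\<forall>i<n. x i \<in> Q" by blast
    then show "z \<in> L" unfolding L_def using prod_loc[of n x] by simp
  qed
  ultimately have "ideal_pow Q n \<subseteq> L" unfolding ideal_pow_def by (rule ideal_span_sub)
  then show ?thesis using assms L_def by blast
qed

lemma uf_pow_in: "uf ^ n * t \<in> ideal_pow Q n"
proof -
  have "uf ^ n \<in> {(\<Prod>i<n. x i) | x. \<forall>i<n. x i \<in> Q}"
    by (intro CollectI exI[of _ "\<lambda>_. uf"]) (simp add: uf(1))
  then have "uf ^ n \<in> ideal_pow Q n" unfolding ideal_pow_def by (rule ideal_span_base)
  then show ?thesis unfolding ideal_pow_def by (rule ideal_mult2[OF ideal_span_ideal])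
qed

lemma val_eq: assumes "s \<notin> Q" "t \<notin> Q" "s * a = uf ^ n * t" shows "val_at Q a = n"
  unfolding val_at_def
proof (rule Greatest_equality)
  show "\<exists>s. s \<notin> Q \<and> s * a \<in> ideal_pow Q n" using assms uf_pow_in by metis
next
  fix m assume "\<exists>s. s \<notin> Q \<and> s * a \<in> ideal_pow Q m"
  then obtain s' where s': "s' \<notin> Q" "s' * a \<in> ideal_pow Q m" by blast
  obtain \<sigma> d where h: "\<sigma> \<notin> Q" "\<sigma> * (s' * a) = uf ^ m * d" using idealpow_loc[OF s'(2)] by blast
  show "m \<le> n"
  proof (rule ccontr)
    assume "\<not> m \<le> n"
    then have mn: "m = n + (m - n)" "m - n > 0" by auto
    have "uf ^ n * (\<sigma> * s' * t) = \<sigma> * s' * (s * a)" using assms(3) by (simp add: algebra_simps)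
    also have "\<dots> = s * (\<sigma> * (s' * a))" by (simp add: algebra_simps)
    also have "\<dots> = uf ^ n * (uf ^ (m - n) * (s * d))" using h(2) mn(1)
      by (metis mult.assoc mult.left_commute power_add)
    finally have "\<sigma> * s' * t = uf ^ (m - n) * (s * d)" using uf_nz by simp
    moreover have "uf ^ (m - n) * (s * d) \<in> Q" using uf_pow_Q mn(2) by blast
    ultimately show False using notQ_mult[OF notQ_mult[OF h(1) s'(1)] assms(2)] by simp
  qed
qed

lemma uf_cancel: assumes "e \<notin> Q" "f \<notin> Q" "uf ^ i * e = uf ^ j * f" shows "i = j"
proof (rule ccontr)
  assume "i \<noteq> j"
  then consider "i < j" | "j < i" by linarith
  then show False
  proof cases
    case 1
    then have "uf ^ i * e = uf ^ i * (uf ^ (j - i) * f)" using assms(3)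
      by (metis le_add_diff_inverse less_imp_le mult.assoc power_add)
    then have "e = uf ^ (j - i) * f" using uf_nz by simp
    then show False using uf_pow_Q[of "j - i" f] 1 assms(1) by simp
  next
    case 2
    then have "uf ^ j * f = uf ^ j * (uf ^ (i - j) * e)" using assms(3)
      by (metis le_add_diff_inverse less_imp_le mult.assoc power_add)
    then have "f = uf ^ (i - j) * e" using uf_nz by simp
    then show False using uf_pow_Q[of "i - j" e] 2 assms(2) by simp
  qed
qed

lemma ord_char:
  assumes "u \<notin> Q" "w \<notin> Q" "g = to_fract (uf ^ i * u) / to_fract (uf ^ j * w)"
  shows "ord_at Q g = int i - int j"
  unfolding ord_at_def
proof (rule the_equality)
  have "uf ^ i * u \<noteq> 0" "uf ^ j * w \<noteq> 0" using uf_nz notQ_nz assms by auto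
  moreover have "val_at Q (uf ^ i * u) = i" by (rule val_eq[of 1 u]) (auto simp: one_notQ assms)
  moreover have "val_at Q (uf ^ j * w) = j" by (rule val_eq[of 1 w]) (auto simp: one_notQ assms)
  ultimately show "\<exists>a b. a \<noteq> 0 \<and> b \<noteq> 0 \<and> g = Fract a b \<and> int i - int j = int (val_at Q a) - int (val_at Q b)"
    using assms(3) by (intro exI[of _ "uf ^ i * u"] exI[of _ "uf ^ j * w"]) (simp add: Fract_conv_to_fract)
next
  fix k assume "\<exists>a b. a \<noteq> 0 \<and> b \<noteq> 0 \<and> g = Fract a b \<and> k = int (val_at Q a) - int (val_at Q b)"
  then obtain a b where ab: "a \<noteq> 0" "b \<noteq> 0" "g = Fract a b" "k = int (val_at Q a) - int (val_at Q b)" by blast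
  obtain n s t where a1: "s \<notin> Q" "t \<notin> Q" "s * a = uf ^ n * t" using L2[OF ab(1)] by blast
  obtain m s' t' where b1: "s' \<notin> Q" "t' \<notin> Q" "s' * b = uf ^ m * t'" using L2[OF ab(2)] by blast
  have va: "val_at Q a = n" using val_eq a1 by blast
  have vb: "val_at Q b = m" using val_eq b1 by blast
  have "to_fract (uf ^ i * u) / to_fract (uf ^ j * w) = to_fract a / to_fract b"
    using assms(3) ab(3) by (simp add: Fract_conv_to_fract)
  then have "to_fract (uf ^ i * u) * to_fract b = to_fract a * to_fract (uf ^ j * w)"
    using ab(1,2) uf_nz notQ_nz[OF assms(2)] by (simp add: field_simps)
  then have e1: "(uf ^ i * u) * b = a * (uf ^ j * w)" by (simp only: to_fract_mult[symmetric] to_fract_eq_iff)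
  have "uf ^ (i + m) * (u * s * t') = (uf ^ i * u) * (s' * b) * s" using b1(3) by (simp add: algebra_simps power_add)
  also have "\<dots> = s' * (uf ^ j * w) * (s * a)" using e1 by (simp add: algebra_simps)
  also have "\<dots> = uf ^ (j + n) * (s' * w * t)" using a1(3) by (simp add: algebra_simps power_add)
  finally have calc: "uf ^ (i + m) * (u * s * t') = uf ^ (j + n) * (s' * w * t)" .
  have n1: "u * s * t' \<notin> Q" using notQ_mult assms(1) a1(1) b1(2) by blast
  have n2: "s' * w * t \<notin> Q" using notQ_mult assms(2) a1(2) b1(1) by blast
  have "i + m = j + n" using uf_cancel[OF n1 n2 calc] .
  then show "k = int i - int j" using ab(4) va vb by simp
qed

lemma ord_exists:
  assumes "g \<noteq> 0" shows "\<exists>i j u w. u \<notin> Q \<and> w \<notin> Q \<and> g = to_fract (uf ^ i * u) / to_fract (uf ^ j * w)"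
proof -
  obtain a b where ab: "g = Fract a b" "b \<noteq> 0" "a \<noteq> 0" using assms by (cases g rule: Fract_cases_nonzero) auto
  obtain n s t where a1: "s \<notin> Q" "t \<notin> Q" "s * a = uf ^ n * t" using L2[OF ab(3)] by blast
  obtain m s' t' where b1: "s' \<notin> Q" "t' \<notin> Q" "s' * b = uf ^ m * t'" using L2[OF ab(2)] by blast
  have ea: "to_fract a = to_fract (uf ^ n * t) / to_fract s"
  proof -
    have "to_fract s * to_fract a = to_fract (uf ^ n * t)" using arg_cong[OF a1(3), of to_fract] by simp
    then show ?thesis using notQ_nz[OF a1(1)] by (simp add: field_simps)
  qed
  have eb: "to_fract b = to_fract (uf ^ m * t') / to_fract s'"
  proof -
    have "to_fract s' * to_fract b = to_fract (uf ^ m * t')" using arg_cong[OF b1(3), of to_fract] by simp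
    then show ?thesis using notQ_nz[OF b1(1)] by (simp add: field_simps)
  qed
  have nz: "to_fract s \<noteq> 0" "to_fract s' \<noteq> 0" "to_fract (uf ^ m * t') \<noteq> 0"
    using notQ_nz a1 b1 uf_nz by auto
  have "g = to_fract (uf ^ n * (t * s')) / to_fract (uf ^ m * (t' * s))"
    unfolding ab(1) Fract_conv_to_fract ea eb using nz by (simp add: field_simps)
  then show ?thesis using notQ_mult a1 b1 by blast
qed

lemma ord_mult: assumes "g \<noteq> 0" "h \<noteq> 0" shows "ord_at Q (g * h) = ord_at Q g + ord_at Q h"
proof -
  obtain i j u w where g: "u \<notin> Q" "w \<notin> Q" "g = to_fract (uf ^ i * u) / to_fract (uf ^ j * w)"
    using ord_exists[OF assms(1)] by blast
  obtain i' j' u' w' where h: "u' \<notin> Q" "w' \<notin> Q" "h = to_fract (uf ^ i' * u') / to_fract (uf ^ j' * w')"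
    using ord_exists[OF assms(2)] by blast
  have "g * h = to_fract (uf ^ (i + i') * (u * u')) / to_fract (uf ^ (j + j') * (w * w'))"
    using g h by (simp add: power_add algebra_simps)
  then have "ord_at Q (g * h) = int (i + i') - int (j + j')"
    using ord_char notQ_mult g h by blast
  then show ?thesis using ord_char[OF g] ord_char[OF h] by simp
qed

lemma ord_one: "ord_at Q 1 = 0"
  using ord_char[of 1 1 1 0 0] one_notQ by simp

lemma ord_inverse: assumes "g \<noteq> 0" shows "ord_at Q (inverse g) = - ord_at Q g"
  using ord_mult[of g "inverse g"] assms ord_one by simp

lemma ord_divide: assumes "g \<noteq> 0" "h \<noteq> 0" shows "ord_at Q (g / h) = ord_at Q g - ord_at Q h"
  using ord_mult[of g "inverse h"] ord_inverse[of h] assms by (simp add: divide_inverse)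

lemma ord_to_fract:
  assumes "a \<noteq> 0" shows "ord_at Q (to_fract a) \<ge> 0" "a \<notin> Q \<Longrightarrow> ord_at Q (to_fract a) = 0"
    "a \<in> Q \<Longrightarrow> ord_at Q (to_fract a) \<ge> 1"
proof -
  obtain n s t where a1: "s \<notin> Q" "t \<notin> Q" "s * a = uf ^ n * t" using L2[OF assms] by blast
  have "to_fract a = to_fract (uf ^ n * t) / to_fract (uf ^ 0 * s)"
    using a1 notQ_nz[OF a1(1)] by (simp add: field_simps flip: to_fract_mult)
  then have o: "ord_at Q (to_fract a) = int n" using ord_char a1 by fastforce
  then show "ord_at Q (to_fract a) \<ge> 0" by simp
  show "a \<notin> Q \<Longrightarrow> ord_at Q (to_fract a) = 0"
  proof -
    assume "a \<notin> Q"
    have "n = 0"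
    proof (rule ccontr)
      assume "n \<noteq> 0"
      then have "s * a \<in> Q" using a1(3) uf_pow_Q by simp
      then show False using notQ_mult[OF a1(1) \<open>a \<notin> Q\<close>] by blast
    qed
    then show ?thesis using o by simp
  qed
  show "a \<in> Q \<Longrightarrow> ord_at Q (to_fract a) \<ge> 1"
  proof -
    assume "a \<in> Q"
    have "n \<noteq> 0"
    proof
      assume "n = 0"
      then have "s * a = t" using a1(3) by simp
      then show False using Q_mult[OF \<open>a \<in> Q\<close>, of s] a1(2) by simp
    qed
    then show ?thesis using o by simp
  qed
qed

lemma ord_uf: "ord_at Q (to_fract uf) = 1"
  using ord_char[of 1 1 "to_fract uf" 1 0] one_notQ by simp

lemma ord_ge:
  assumes "z \<noteq> 0" "w \<notin> Q" "g = to_fract (uf ^ i * z) / to_fract (uf ^ j * w)"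
  shows "ord_at Q g \<ge> int i - int j"
proof -
  obtain n s t where a1: "s \<notin> Q" "t \<notin> Q" "s * z = uf ^ n * t" using L2[OF assms(1)] by blast
  have "g = to_fract (uf ^ (i + n) * t) / to_fract (uf ^ j * (w * s))"
  proof -
    have "to_fract (s * z) = to_fract (uf ^ n * t)" using a1 by simp
    then show ?thesis unfolding assms(3) using notQ_nz[OF a1(1)] notQ_nz[OF assms(2)] uf_nz
      by (simp add: field_simps power_add)
  qed
  then have "ord_at Q g = int (i + n) - int j" using ord_char a1 notQ_mult assms(2) by blast
  then show ?thesis by simp
qed

lemma ord_add:
  assumes "g \<noteq> 0" "h \<noteq> 0" "g + h \<noteq> 0"
  shows "ord_at Q (g + h) \<ge> min (ord_at Q g) (ord_at Q h)"
proof -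
  obtain i j u w where g: "u \<notin> Q" "w \<notin> Q" "g = to_fract (uf ^ i * u) / to_fract (uf ^ j * w)"
    using ord_exists[OF assms(1)] by blast
  obtain i' j' u' w' where h: "u' \<notin> Q" "w' \<notin> Q" "h = to_fract (uf ^ i' * u') / to_fract (uf ^ j' * w')"
    using ord_exists[OF assms(2)] by blast
  have og: "ord_at Q g = int i - int j" using ord_char[OF g] .
  have oh: "ord_at Q h = int i' - int j'" using ord_char[OF h] .
  have wnz: "w \<noteq> 0" "w' \<noteq> 0" using notQ_nz g h by auto
  have ww: "w * w' \<notin> Q" using notQ_mult g h by blast
  have base: "g + h = to_fract (uf ^ (i + j') * (u * w') + uf ^ (i' + j) * (u' * w)) / to_fract (uf ^ (j + j') * (w * w'))"
    unfolding g(3) h(3) using wnz uf_nz by (simp add: field_simps power_add)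
  show ?thesis
  proof (cases "i + j' \<le> i' + j")
    case True
    define z where "z = u * w' + uf ^ (i' + j - (i + j')) * (u' * w)"
    have "uf ^ (i + j') * (u * w') + uf ^ (i' + j) * (u' * w) = uf ^ (i + j') * z"
      unfolding z_def using True by (simp add: algebra_simps flip: power_add)
    then have e: "g + h = to_fract (uf ^ (i + j') * z) / to_fract (uf ^ (j + j') * (w * w'))"
      using base by simp
    have "z \<noteq> 0" using e assms(3) by auto
    then have "ord_at Q (g + h) \<ge> int (i + j') - int (j + j')" using ord_ge[OF _ ww e] by blast
    then show ?thesis using og by simp
  next
    case False
    define z where "z = uf ^ (i + j' - (i' + j)) * (u * w') + u' * w"
    have "uf ^ (i + j') * (u * w') + uf ^ (i' + j) * (u' * w) = uf ^ (i' + j) * z"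
      unfolding z_def using False by (simp add: algebra_simps flip: power_add)
    then have e: "g + h = to_fract (uf ^ (i' + j) * z) / to_fract (uf ^ (j + j') * (w * w'))"
      using base by simp
    have "z \<noteq> 0" using e assms(3) by auto
    then have "ord_at Q (g + h) \<ge> int (i' + j) - int (j + j')" using ord_ge[OF _ ww e] by blast
    then show ?thesis using oh by simp
  qed
qed

end

lemma ideal_plus_elem:
  assumes M: "ring_ideal (M::'a::comm_ring_1 set)"
  shows "ring_ideal {m + r * x | m r. m \<in> M}" "M \<subseteq> {m + r * x | m r. m \<in> M}" "x \<in> {m + r * x | m r. m \<in> M}"
proof -
  show "ring_ideal {m + r * x | m r. m \<in> M}" unfolding ring_ideal_def
  proof (intro conjI ballI allI)
    show "0 \<in> {m + r * x |m r. m \<in> M}" using ideal_0[OF M]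
      by (intro CollectI exI[of _ 0] exI[of _ 0]) simp
  next
    fix a b assume "a \<in> {m + r * x |m r. m \<in> M}" "b \<in> {m + r * x |m r. m \<in> M}"
    then obtain m r m' r' where "a = m + r * x" "b = m' + r' * x" "m \<in> M" "m' \<in> M" by blast
    then show "a + b \<in> {m + r * x |m r. m \<in> M}"
      by (intro CollectI exI[of _ "m + m'"] exI[of _ "r + r'"]) (auto simp: algebra_simps ideal_add[OF M])
  next
    fix c a assume "a \<in> {m + r * x |m r. m \<in> M}"
    then obtain m r where "a = m + r * x" "m \<in> M" by blast
    then show "c * a \<in> {m + r * x |m r. m \<in> M}"
      by (intro CollectI exI[of _ "c * m"] exI[of _ "c * r"]) (auto simp: algebra_simps ideal_mult[OF M])
  qed
  show "M \<subseteq> {m + r * x | m r. m \<in> M}"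
  proof
    fix z assume "z \<in> M" then show "z \<in> {m + r * x |m r. m \<in> M}" by (intro CollectI exI[of _ z] exI[of _ 0]) simp
  qed
  show "x \<in> {m + r * x | m r. m \<in> M}" using ideal_0[OF M] by (intro CollectI exI[of _ 0] exI[of _ 1]) simp
qed

lemma prod_split:
  "(\<Prod>i<k+l. f i) = (\<Prod>i<k. f i) * (\<Prod>i<l. f (k + i))" for f :: "nat \<Rightarrow> 'a::comm_monoid_mult"
proof -
  have "(\<Prod>i<k+l. f i) = (\<Prod>i<k. f i) * (\<Prod>i=k..<k+l. f i)"
    by (simp add: lessThan_atLeast0 prod.atLeastLessThan_concat)
  also have "(\<Prod>i=k..<k+l. f i) = (\<Prod>i=0..<l. f (i + k))"
    using prod.shift_bounds_nat_ivl[of f 0 k l] by (simp add: add.commute)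
  finally show ?thesis by (simp add: lessThan_atLeast0 add.commute)
qed

context dd begin

definition "cprod I = (\<exists>Ps::'a set list. (\<forall>P\<in>set Ps. prime_divisor P) \<and>
   (\<forall>x. (\<forall>i<length Ps. x i \<in> Ps ! i) \<longrightarrow> (\<Prod>i<length Ps. x i) \<in> I))"

lemma cprod_all: assumes "ring_ideal I" "I \<noteq> {0}" shows "cprod I"
proof (rule ccontr)
  assume nI: "\<not> cprod I"
  define F where "F = {J. ring_ideal J \<and> J \<noteq> {0} \<and> \<not> cprod J}"
  obtain M where M: "M \<in> F" "\<forall>J\<in>F. M \<subseteq> J \<longrightarrow> J = M"
    using noeth_max[OF noeth, of F I] assms nI unfolding F_def by blast
  have Mid: "ring_ideal M" and Mnz: "M \<noteq> {0}" and Mc: "\<not> cprod M" using M(1) F_def by auto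
  have "\<not> prime_ideal M"
  proof
    assume "prime_ideal M"
    then have "prime_divisor M" using Mnz by (simp add: prime_divisor_def)
    then have "cprod M" unfolding cprod_def by (intro exI[of _ "[M]"]) auto
    then show False using Mc by blast
  qed
  moreover have "M \<noteq> UNIV"
  proof
    assume "M = UNIV" then have "cprod M" unfolding cprod_def by (intro exI[of _ "[]"]) auto
    then show False using Mc by blast
  qed
  ultimately obtain x y where xy: "x * y \<in> M" "x \<notin> M" "y \<notin> M"
    using Mid unfolding prime_ideal_def by blast
  define J1 where "J1 = {m + r * x | m r. m \<in> M}"
  define J2 where "J2 = {m + r * y | m r. m \<in> M}"
  have J1: "ring_ideal J1" "M \<subseteq> J1" "x \<in> J1" using ideal_plus_elem[OF Mid, of x] J1_def by auto
  have J2: "ring_ideal J2" "M \<subseteq> J2" "y \<in> J2" using ideal_plus_elem[OF Mid, of y] J2_def by auto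
  have "cprod J1"
  proof (rule ccontr)
    assume "\<not> cprod J1"
    moreover have "J1 \<noteq> {0}" using J1(2) Mnz ideal_0[OF Mid] by blast
    ultimately have "J1 \<in> F" using J1(1) F_def by blast
    then have "J1 = M" using M(2) J1(2) by blast
    then show False using J1(3) xy(2) by blast
  qed
  then obtain Ps1 where P1: "\<forall>P\<in>set Ps1. prime_divisor P"
    "\<And>z. (\<forall>i<length Ps1. z i \<in> Ps1 ! i) \<Longrightarrow> (\<Prod>i<length Ps1. z i) \<in> J1" unfolding cprod_def by blast
  have "cprod J2"
  proof (rule ccontr)
    assume "\<not> cprod J2"
    moreover have "J2 \<noteq> {0}" using J2(2) Mnz ideal_0[OF Mid] by blast
    ultimately have "J2 \<in> F" using J2(1) F_def by blast
    then have "J2 = M" using M(2) J2(2) by blast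
    then show False using J2(3) xy(3) by blast
  qed
  then obtain Ps2 where P2: "\<forall>P\<in>set Ps2. prime_divisor P"
    "\<And>z. (\<forall>i<length Ps2. z i \<in> Ps2 ! i) \<Longrightarrow> (\<Prod>i<length Ps2. z i) \<in> J2" unfolding cprod_def by blast
  have "cprod M" unfolding cprod_def
  proof (intro exI[of _ "Ps1 @ Ps2"] conjI allI impI)
    show "\<forall>P\<in>set (Ps1 @ Ps2). prime_divisor P" using P1(1) P2(1) by auto
  next
    fix z assume z: "\<forall>i<length (Ps1 @ Ps2). z i \<in> (Ps1 @ Ps2) ! i"
    have "(\<Prod>i<length Ps1. z i) \<in> J1"
    proof (intro P1(2) allI impI)
      fix i assume "i < length Ps1" then show "z i \<in> Ps1 ! i" using z[rule_format, of i] by (simp add: nth_append)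
    qed
    then obtain m r where a: "(\<Prod>i<length Ps1. z i) = m + r * x" "m \<in> M" unfolding J1_def by blast
    have "(\<Prod>i<length Ps2. z (length Ps1 + i)) \<in> J2"
    proof (intro P2(2) allI impI)
      fix i assume "i < length Ps2" then show "z (length Ps1 + i) \<in> Ps2 ! i"
        using z[rule_format, of "length Ps1 + i"] by (simp add: nth_append)
    qed
    then obtain m' r' where b: "(\<Prod>i<length Ps2. z (length Ps1 + i)) = m' + r' * y" "m' \<in> M" unfolding J2_def by blast
    have "(\<Prod>i<length (Ps1 @ Ps2). z i) = (m + r * x) * (m' + r' * y)"
      using prod_split[of z "length Ps1" "length Ps2"] a b by simp
    also have "\<dots> = m * (m' + r' * y) + (r * x) * m' + (r * r') * (x * y)" by (simp add: algebra_simps)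
    also have "\<dots> \<in> M"
    proof -
      have 1: "m * (m' + r' * y) \<in> M" by (rule ideal_mult2[OF Mid a(2)])
      have 2: "(r * x) * m' \<in> M" by (rule ideal_mult[OF Mid b(2)])
      have 3: "(r * r') * (x * y) \<in> M" by (rule ideal_mult[OF Mid xy(1)])
      show ?thesis by (rule ideal_add[OF Mid ideal_add[OF Mid 1 2] 3])
    qed
    finally show "(\<Prod>i<length (Ps1 @ Ps2). z i) \<in> M" .
  qed
  then show False using Mc by blast
qed

lemma pd_distinct: assumes "prime_divisor (P::'a set)" "prime_divisor Q" "P \<noteq> Q" shows "\<exists>p\<in>P. p \<notin> Q"
proof (rule ccontr)
  assume "\<not> ?thesis"
  then have "P \<subseteq> Q" by blast
  moreover have "maximal_ideal P" using dim1 assms(1) unfolding prime_divisor_def by blast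
  moreover have "ring_ideal Q" "Q \<noteq> UNIV" using assms(2) by (auto simp: prime_divisor_def prime_ideal_def)
  ultimately show False using assms(3) unfolding maximal_ideal_def by blast
qed

lemma prod_notin_prime:
  assumes "prime_ideal Q" "\<forall>i<(n::nat). x i \<notin> Q" shows "(\<Prod>i<n. x i) \<notin> Q"
  using assms(2)
proof (induction n)
  case 0
  have "1 \<notin> Q" using assms(1) ideal_UNIV1 unfolding prime_ideal_def by blast
  then show ?case by simp
next
  case (Suc n)
  then show ?case using assms(1) unfolding prime_ideal_def by auto
qed

lemma finite_primes_containing: assumes "(a::'a) \<noteq> 0" shows "finite {P. prime_divisor P \<and> a \<in> P}"
proof -
  define I where "I = {a * r | r. True}"
  have "ring_ideal I" unfolding ring_ideal_def I_def
  proof (intro conjI ballI allI)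
    show "0 \<in> {a * r |r. True}" by (intro CollectI exI[of _ 0]) simp
  next
    fix x y assume "x \<in> {a * r |r. True}" "y \<in> {a * r |r. True}"
    then obtain r r' where "x = a * r" "y = a * r'" by blast
    then show "x + y \<in> {a * r |r. True}" by (intro CollectI exI[of _ "r + r'"]) (simp add: algebra_simps)
  next
    fix c x assume "x \<in> {a * r |r. True}"
    then obtain r where "x = a * r" by blast
    then show "c * x \<in> {a * r |r. True}" by (intro CollectI exI[of _ "c * r"]) (simp add: algebra_simps)
  qed
  moreover have "a \<in> I" unfolding I_def by (intro CollectI exI[of _ 1]) simp
  then have "I \<noteq> {0}" using assms by blast
  ultimately have "cprod I" using cprod_all by blast
  then obtain Ps where Ps: "\<forall>P\<in>set Ps. prime_divisor P"
    "\<forall>z. (\<forall>i<length Ps. z i \<in> Ps ! i) \<longrightarrow> (\<Prod>i<length Ps. z i) \<in> I"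
    unfolding cprod_def by blast
  have "{P. prime_divisor P \<and> a \<in> P} \<subseteq> set Ps"
  proof
    fix Q assume "Q \<in> {P. prime_divisor P \<and> a \<in> P}"
    then have Q: "prime_divisor Q" "a \<in> Q" by auto
    show "Q \<in> set Ps"
    proof (rule ccontr)
      assume "Q \<notin> set Ps"
      then have "\<forall>i<length Ps. \<exists>p\<in>Ps ! i. p \<notin> Q" using pd_distinct Ps(1) Q(1) nth_mem by metis
      then obtain z where z: "\<forall>i<length Ps. z i \<in> Ps ! i \<and> z i \<notin> Q" by metis
      then have "(\<Prod>i<length Ps. z i) \<in> I" using Ps(2)[rule_format, of z] by blast
      then obtain r where "(\<Prod>i<length Ps. z i) = a * r" unfolding I_def by blast
      moreover have "a * r \<in> Q" using Q ideal_mult2 unfolding prime_divisor_def prime_ideal_def by blast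
      moreover have "(\<Prod>i<length Ps. z i) \<notin> Q"
        using prod_notin_prime[of Q "length Ps" z] z Q(1) by (simp add: prime_divisor_def)
      ultimately show False by simp
    qed
  qed
  then show ?thesis using finite_subset by blast
qed

lemma ordP_mult: "prime_divisor (P::'a set) \<Longrightarrow> g \<noteq> 0 \<Longrightarrow> h \<noteq> 0 \<Longrightarrow> ord_at P (g * h) = ord_at P g + ord_at P h"
proof - assume "prime_divisor P" "g \<noteq> 0" "h \<noteq> 0"
  then interpret dq T P by unfold_locales
  show ?thesis using ord_mult \<open>g \<noteq> 0\<close> \<open>h \<noteq> 0\<close> by blast
qed

lemma ordP_divide: "prime_divisor (P::'a set) \<Longrightarrow> g \<noteq> 0 \<Longrightarrow> h \<noteq> 0 \<Longrightarrow> ord_at P (g / h) = ord_at P g - ord_at P h"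
proof - assume "prime_divisor P" "g \<noteq> 0" "h \<noteq> 0"
  then interpret dq T P by unfold_locales
  show ?thesis using ord_divide \<open>g \<noteq> 0\<close> \<open>h \<noteq> 0\<close> by blast
qed

lemma ordP_add: "prime_divisor (P::'a set) \<Longrightarrow> g \<noteq> 0 \<Longrightarrow> h \<noteq> 0 \<Longrightarrow> g + h \<noteq> 0 \<Longrightarrow>
    ord_at P (g + h) \<ge> min (ord_at P g) (ord_at P h)"
proof - assume "prime_divisor P" "g \<noteq> 0" "h \<noteq> 0" "g + h \<noteq> 0"
  then interpret dq T P by unfold_locales
  show ?thesis using ord_add \<open>g \<noteq> 0\<close> \<open>h \<noteq> 0\<close> \<open>g + h \<noteq> 0\<close> by blast
qed

lemma ordP_to_fract:
  assumes "prime_divisor (P::'a set)" "a \<noteq> 0"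
  shows "ord_at P (to_fract a) \<ge> 0" "a \<notin> P \<Longrightarrow> ord_at P (to_fract a) = 0"
    "a \<in> P \<Longrightarrow> ord_at P (to_fract a) \<ge> 1"
proof -
  interpret dq T P using assms(1) by unfold_locales
  show "ord_at P (to_fract a) \<ge> 0" "a \<notin> P \<Longrightarrow> ord_at P (to_fract a) = 0"
    "a \<in> P \<Longrightarrow> ord_at P (to_fract a) \<ge> 1" using ord_to_fract assms(2) by auto
qed

lemma ordP_power: "prime_divisor (P::'a set) \<Longrightarrow> g \<noteq> 0 \<Longrightarrow> ord_at P (g ^ k) = int k * ord_at P g"
proof (induction k)
  case 0
  interpret dq T P using 0 by unfold_locales
  show ?case using ord_one by simp
next
  case (Suc k)
  then show ?case using ordP_mult[of P g "g ^ k"] by (simp add: algebra_simps)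
qed

lemma finite_ord_support: assumes "(g::'a fract) \<noteq> 0" shows "finite {P. prime_divisor P \<and> ord_at P g \<noteq> 0}"
proof -
  obtain a b where ab: "g = Fract a b" "b \<noteq> 0" "a \<noteq> 0" using assms by (cases g rule: Fract_cases_nonzero) auto
  have "{P. prime_divisor P \<and> ord_at P g \<noteq> 0} \<subseteq> {P. prime_divisor P \<and> a \<in> P} \<union> {P. prime_divisor P \<and> b \<in> P}"
  proof
    fix P assume "P \<in> {P. prime_divisor P \<and> ord_at P g \<noteq> 0}"
    then have P: "prime_divisor P" "ord_at P g \<noteq> 0" by auto
    have "ord_at P g = ord_at P (to_fract a) - ord_at P (to_fract b)"
      using ordP_divide[OF P(1)] ab by (simp add: Fract_conv_to_fract)
    then have "a \<in> P \<or> b \<in> P" using ordP_to_fract(2)[OF P(1)] ab P(2) by force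
    then show "P \<in> {P. prime_divisor P \<and> a \<in> P} \<union> {P. prime_divisor P \<and> b \<in> P}" using P(1) by blast
  qed
  then show ?thesis using finite_primes_containing ab by (meson finite_UnI finite_subset)
qed

lemma ord_nonneg_integral:
  assumes "\<forall>P. prime_divisor P \<longrightarrow> ord_at P (g::'a fract) \<ge> 0" shows "g \<in> range to_fract"
proof (cases "g = 0")
  case True then show ?thesis by (metis rangeI to_fract_0)
next
  case gnz: False
  define I where "I = {c. to_fract c * g \<in> range to_fract}"
  have Iid: "ring_ideal I" unfolding ring_ideal_def I_def
  proof (intro conjI ballI allI)
    show "0 \<in> {c. to_fract c * g \<in> range to_fract}" by (simp add: image_iff)
  next
    fix x y assume "x \<in> {c. to_fract c * g \<in> range to_fract}" "y \<in> {c. to_fract c * g \<in> range to_fract}"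
    then obtain u v where "to_fract x * g = to_fract u" "to_fract y * g = to_fract v" by auto
    then have "to_fract (x + y) * g = to_fract (u + v)" by (simp add: distrib_right)
    then show "x + y \<in> {c. to_fract c * g \<in> range to_fract}" by (metis (mono_tags) mem_Collect_eq rangeI)
  next
    fix r x assume "x \<in> {c. to_fract c * g \<in> range to_fract}"
    then obtain u where "to_fract x * g = to_fract u" by auto
    then have "to_fract (r * x) * g = to_fract (r * u)" by (simp add: mult.assoc)
    then show "r * x \<in> {c. to_fract c * g \<in> range to_fract}" by (metis (mono_tags) mem_Collect_eq rangeI)
  qed
  show ?thesis
  proof (cases "1 \<in> I")
    case True then show ?thesis unfolding I_def by simp
  next
    case False
    obtain M where M: "maximal_ideal M" "I \<subseteq> M" using exists_maximal[OF noeth Iid False] by blast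
    obtain a b where ab: "g = Fract a b" "b \<noteq> 0" using Fract_cases by blast
    have "to_fract b * g = to_fract a" using ab by (simp add: Fract_conv_to_fract)
    then have "b \<in> I" unfolding I_def by auto
    then have "M \<noteq> {0}" using M(2) ab(2) by blast
    then have pM: "prime_divisor M" using max_is_prime[OF M(1)] by (simp add: prime_divisor_def)
    interpret dq T M using pM by unfold_locales
    obtain i j u w where g: "u \<notin> M" "w \<notin> M" "g = to_fract (uf ^ i * u) / to_fract (uf ^ j * w)"
      using ord_exists[OF gnz] by blast
    have "int i - int j \<ge> 0" using ord_char[OF g] assms pM by metis
    then have ij: "i = j + (i - j)" by simp
    have "to_fract w * g = to_fract (uf ^ (i - j) * u)"
      unfolding g(3) using notQ_nz[OF g(2)] uf_nz
      by (subst ij) (simp add: power_add field_simps)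
    then have "w \<in> I" unfolding I_def by (metis (mono_tags) mem_Collect_eq rangeI)
    then show ?thesis using M(2) g(2) by blast
  qed
qed

lemma approx:
  assumes "finite F" "\<forall>P\<in>F. prime_divisor P" "prime_divisor (Q::'a set)" "Q \<notin> F"
  shows "\<exists>x. x \<notin> Q \<and> (\<forall>P\<in>F. ord_at P (to_fract x) \<ge> int (n P))"
  using assms
proof (induction F rule: finite_induct)
  case empty
  have "(1::'a) \<notin> Q" using assms(3) ideal_UNIV1 by (auto simp: prime_divisor_def prime_ideal_def)
  then show ?case by blast
next
  case (insert P F)
  then obtain x where x: "x \<notin> Q" "\<forall>P\<in>F. ord_at P (to_fract x) \<ge> int (n P)" by auto
  have PQ: "P \<noteq> Q" using insert.prems by auto
  obtain p where p: "p \<in> P" "p \<notin> Q" using pd_distinct[OF _ insert.prems(2) PQ] insert.prems by auto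
  have Qp: "prime_ideal Q" using insert.prems(2) by (simp add: prime_divisor_def)
  have Q0: "0 \<in> Q" using Qp ideal_0 by (auto simp: prime_ideal_def)
  have pnz: "p \<noteq> 0" "x \<noteq> 0" using p(2) x(1) Q0 by auto
  define x' where "x' = x * p ^ n P"
  have "x' \<notin> Q" unfolding x'_def using x(1) p(2) Qp
  proof -
    have "p ^ k \<notin> Q" for k
    proof (induction k)
      case 0 show ?case using Qp ideal_UNIV1 by (auto simp: prime_ideal_def)
    next
      case (Suc k) then show ?case using p(2) Qp by (auto simp: prime_ideal_def)
    qed
    then show "x * p ^ n P \<notin> Q" using x(1) Qp by (auto simp: prime_ideal_def)
  qed
  moreover have "ord_at P' (to_fract x') \<ge> int (n P')" if "P' \<in> insert P F" for P'
  proof -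
    have pd: "prime_divisor P'" using that insert.prems by auto
    have e: "ord_at P' (to_fract x') = ord_at P' (to_fract x) + int (n P) * ord_at P' (to_fract p)"
      unfolding x'_def using ordP_mult[OF pd] ordP_power[OF pd] pnz by simp
    have o1: "ord_at P' (to_fract x) \<ge> 0" "ord_at P' (to_fract p) \<ge> 0"
      using ordP_to_fract(1)[OF pd] pnz by auto
    show ?thesis
    proof (cases "P' = P")
      case True
      then have "ord_at P' (to_fract p) \<ge> 1" using ordP_to_fract(3)[OF pd] pnz p(1) by auto
      then have "int (n P) * ord_at P' (to_fract p) \<ge> int (n P)"
        by (metis mult.right_neutral mult_left_mono of_nat_0_le_iff)
      then show ?thesis using e o1 unfolding True by linarith
    next
      case False
      then have "P' \<in> F" using that by auto
      then have "ord_at P' (to_fract x) \<ge> int (n P')" using x(2) by blast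
      then show ?thesis using e o1 by (simp add: add_increasing2)
    qed
  qed
  ultimately show ?case by blast
qed

lemma approx0:
  assumes "finite F" "\<forall>P\<in>F. prime_divisor (P::'a set)"
  shows "\<exists>x. x \<noteq> 0 \<and> (\<forall>P\<in>F. ord_at P (to_fract x) \<ge> int (n P))"
  using assms
proof (induction F rule: finite_induct)
  case empty
  show ?case by (intro exI[of _ 1]) simp
next
  case (insert P F)
  then obtain x where x: "x \<noteq> 0" "\<forall>P\<in>F. ord_at P (to_fract x) \<ge> int (n P)" by auto
  have "P \<noteq> {0}" "ring_ideal P" using insert.prems by (auto simp: prime_divisor_def prime_ideal_def)
  then obtain p where p: "p \<in> P" "p \<noteq> 0" using ideal_0 by blast
  define x' where "x' = x * p ^ n P"
  have "x' \<noteq> 0" unfolding x'_def using x(1) p(2) by simp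
  moreover have "ord_at P' (to_fract x') \<ge> int (n P')" if "P' \<in> insert P F" for P'
  proof -
    have pd: "prime_divisor P'" using that insert.prems by auto
    have e: "ord_at P' (to_fract x') = ord_at P' (to_fract x) + int (n P) * ord_at P' (to_fract p)"
      unfolding x'_def using ordP_mult[OF pd] ordP_power[OF pd] p(2) x(1) by simp
    have o1: "ord_at P' (to_fract x) \<ge> 0" "ord_at P' (to_fract p) \<ge> 0"
      using ordP_to_fract(1)[OF pd] p(2) x(1) by auto
    show ?thesis
    proof (cases "P' = P")
      case True
      then have "ord_at P' (to_fract p) \<ge> 1" using ordP_to_fract(3)[OF pd] p by auto
      then have "int (n P) * ord_at P' (to_fract p) \<ge> int (n P)"
        by (metis mult.right_neutral mult_left_mono of_nat_0_le_iff)
      then show ?thesis using e o1 unfolding True by linarith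
    next
      case False
      then have "P' \<in> F" using that by auto
      then have "ord_at P' (to_fract x) \<ge> int (n P')" using x(2) by blast
      then show ?thesis using e o1 by (simp add: add_increasing2)
    qed
  qed
  ultimately show ?case by blast
qed

end

context dd begin

definition Mk :: "('a set \<Rightarrow> int) \<Rightarrow> 'a fract set" where
  "Mk k = {g. g \<noteq> 0 \<and> (\<forall>P. prime_divisor P \<longrightarrow> ord_at P g \<ge> k P)} \<union> {0}"

definition finsupp :: "('a set \<Rightarrow> int) \<Rightarrow> bool" where
  "finsupp k \<longleftrightarrow> finite {P. prime_divisor P \<and> k P \<noteq> 0}"

definition Span :: "'a fract set \<Rightarrow> 'a fract set" where
  "Span X = {\<Sum>i<n. to_fract (c i) * x i | n c x. \<forall>i<(n::nat). x i \<in> X}"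

lemma Span_0: "0 \<in> Span X"
  unfolding Span_def by (intro CollectI exI[of _ 0]) simp

lemma Span_base: "x \<in> X \<Longrightarrow> x \<in> Span X"
  unfolding Span_def by (intro CollectI exI[of _ 1] exI[of _ "\<lambda>_. 1"] exI[of _ "\<lambda>_. x"]) simp

lemma Span_add: assumes "x \<in> Span X" "y \<in> Span X" shows "x + y \<in> Span X"
proof -
  obtain k::nat and c s where 1: "\<forall>i<k. s i \<in> X" "x = (\<Sum>i<k. to_fract (c i) * s i)"
    using assms(1) unfolding Span_def mem_Collect_eq by blast
  obtain k'::nat and c' s' where 2: "\<forall>i<k'. s' i \<in> X" "y = (\<Sum>i<k'. to_fract (c' i) * s' i)"
    using assms(2) unfolding Span_def mem_Collect_eq by blast
  define C where "C i = (if i < k then c i else c' (i - k))" for i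
  define T where "T i = (if i < k then s i else s' (i - k))" for i
  have "(\<Sum>i<k+k'. to_fract (C i) * T i) = (\<Sum>i<k. to_fract (C i) * T i) + (\<Sum>i=k..<k+k'. to_fract (C i) * T i)"
    by (simp add: lessThan_atLeast0 sum.atLeastLessThan_concat)
  also have "(\<Sum>i<k. to_fract (C i) * T i) = (\<Sum>i<k. to_fract (c i) * s i)" by (rule sum.cong) (auto simp: C_def T_def)
  also have "(\<Sum>i=k..<k+k'. to_fract (C i) * T i) = (\<Sum>i=0..<k'. to_fract (C (i + k)) * T (i + k))"
    using sum.shift_bounds_nat_ivl[of "\<lambda>i. to_fract (C i) * T i" 0 k k'] by (simp add: add.commute)
  also have "\<dots> = (\<Sum>i<k'. to_fract (c' i) * s' i)" by (rule sum.cong) (auto simp: C_def T_def)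
  finally have "x + y = (\<Sum>i<k+k'. to_fract (C i) * T i)" using 1 2 by simp
  moreover have "\<forall>i<k+k'. T i \<in> X" using 1 2 by (auto simp: T_def)
  ultimately show ?thesis unfolding Span_def mem_Collect_eq by (intro exI[of _ "k+k'"] exI[of _ C] exI[of _ T]) simp
qed

lemma Span_smult: assumes "x \<in> Span X" shows "to_fract r * x \<in> Span X"
proof -
  obtain k::nat and c s where 1: "\<forall>i<k. s i \<in> X" "x = (\<Sum>i<k. to_fract (c i) * s i)"
    using assms(1) unfolding Span_def mem_Collect_eq by blast
  have "to_fract r * x = (\<Sum>i<k. to_fract (r * c i) * s i)" using 1 by (simp add: sum_distrib_left mult.assoc)
  then show ?thesis using 1 unfolding Span_def mem_Collect_eq
    by (intro exI[of _ k] exI[of _ "\<lambda>i. r * c i"] exI[of _ s]) simp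
qed

lemma Span_induct:
  assumes "x \<in> Span X" "P 0" "\<And>y c z. P y \<Longrightarrow> z \<in> X \<Longrightarrow> P (y + to_fract c * z)"
  shows "P x"
proof -
  obtain k::nat and c s where 1: "\<forall>i<k. s i \<in> X" "x = (\<Sum>i<k. to_fract (c i) * s i)"
    using assms(1) unfolding Span_def mem_Collect_eq by blast
  have "\<forall>i<m. s i \<in> X \<Longrightarrow> P (\<Sum>i<m. to_fract (c i) * s i)" for m
    by (induction m) (auto simp: assms(2,3))
  then show ?thesis using 1 by simp
qed

lemma Mk_0: "0 \<in> Mk k" unfolding Mk_def by simp

lemma Mk_add: assumes "g \<in> Mk k" "h \<in> Mk k" shows "g + h \<in> Mk k"
proof (cases "g = 0 \<or> h = 0 \<or> g + h = 0")
  case True then show ?thesis using assms Mk_0 by auto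
next
  case False
  have "ord_at P (g + h) \<ge> k P" if "prime_divisor P" for P
  proof -
    have "ord_at P g \<ge> k P" "ord_at P h \<ge> k P" using assms False that unfolding Mk_def by auto
    then show ?thesis using ordP_add[OF that] False by force
  qed
  then show ?thesis using False unfolding Mk_def by blast
qed

lemma Mk_mult: assumes "g \<in> Mk k1" "h \<in> Mk k2" shows "g * h \<in> Mk (\<lambda>P. k1 P + k2 P)"
proof (cases "g = 0 \<or> h = 0")
  case True then show ?thesis using Mk_0 by auto
next
  case False
  have "ord_at P (g * h) \<ge> k1 P + k2 P" if "prime_divisor P" for P
  proof -
    have "ord_at P g \<ge> k1 P" "ord_at P h \<ge> k2 P" using assms False that unfolding Mk_def by auto
    moreover have "ord_at P (g * h) = ord_at P g + ord_at P h" using ordP_mult[OF that] False by blast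
    ultimately show ?thesis by linarith
  qed
  then show ?thesis using False unfolding Mk_def by simp
qed

lemma Mk_smult: assumes "g \<in> Mk k" shows "to_fract c * g \<in> Mk k"
proof (cases "c = 0 \<or> g = 0")
  case True then show ?thesis using Mk_0 by auto
next
  case False
  have "ord_at P (to_fract c * g) \<ge> k P" if "prime_divisor P" for P
  proof -
    have "ord_at P g \<ge> k P" using assms False that unfolding Mk_def by auto
    moreover have "ord_at P (to_fract c) \<ge> 0" using ordP_to_fract(1)[OF that] False by blast
    moreover have "ord_at P (to_fract c * g) = ord_at P (to_fract c) + ord_at P g" using ordP_mult[OF that] False by simp
    ultimately show ?thesis by linarith
  qed
  then show ?thesis using False unfolding Mk_def by simp
qed

lemma Mk_mono: assumes "\<forall>P. prime_divisor P \<longrightarrow> k' P \<le> k P" shows "Mk k \<subseteq> Mk k'"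
proof
  fix g assume "g \<in> Mk k"
  then have "g = 0 \<or> (g \<noteq> 0 \<and> (\<forall>P. prime_divisor P \<longrightarrow> ord_at P g \<ge> k P))" unfolding Mk_def by blast
  then show "g \<in> Mk k'"
  proof
    assume "g = 0" then show ?thesis by (simp add: Mk_0)
  next
    assume h: "g \<noteq> 0 \<and> (\<forall>P. prime_divisor P \<longrightarrow> ord_at P g \<ge> k P)"
    have "\<forall>P. prime_divisor P \<longrightarrow> ord_at P g \<ge> k' P"
    proof (intro allI impI)
      fix P :: "'a set" assume "prime_divisor P"
      then show "ord_at P g \<ge> k' P" using h assms by (meson order.trans)
    qed
    then show ?thesis using h unfolding Mk_def by blast
  qed
qed

lemma Span_Mk: assumes "X \<subseteq> Mk k" shows "Span X \<subseteq> Mk k"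
proof
  fix x assume "x \<in> Span X"
  then show "x \<in> Mk k"
  proof (rule Span_induct[of x X "\<lambda>x. x \<in> Mk k"])
    show "0 \<in> Mk k" by (rule Mk_0)
  next
    fix y c z assume "y \<in> Mk k" "z \<in> X"
    then show "y + to_fract c * z \<in> Mk k" using assms by (intro Mk_add Mk_smult) auto
  qed
qed

lemma local_mult:
  assumes Q: "prime_divisor Q" and h: "h \<noteq> 0" and k: "finsupp k" and o: "ord_at Q h \<ge> k Q"
  shows "\<exists>x. x \<notin> Q \<and> to_fract x * h \<in> Mk k"
proof -
  define F where "F = {P. prime_divisor P \<and> (k P \<noteq> 0 \<or> ord_at P h \<noteq> 0)} - {Q}"
  have "F \<subseteq> {P. prime_divisor P \<and> k P \<noteq> 0} \<union> {P. prime_divisor P \<and> ord_at P h \<noteq> 0}" unfolding F_def by blast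
  then have fF: "finite F" using k finite_ord_support[OF h] unfolding finsupp_def by (meson finite_UnI finite_subset)
  obtain x where x: "x \<notin> Q" "\<forall>P\<in>F. ord_at P (to_fract x) \<ge> int (nat (k P - ord_at P h))"
    using approx[OF fF _ Q, of "\<lambda>P. nat (k P - ord_at P h)"] unfolding F_def by auto
  have xnz: "x \<noteq> 0" using x(1) Q ideal_0 unfolding prime_divisor_def prime_ideal_def by blast
  have "ord_at P (to_fract x * h) \<ge> k P" if P: "prime_divisor P" for P
  proof -
    have e: "ord_at P (to_fract x * h) = ord_at P (to_fract x) + ord_at P h"
      using ordP_mult[OF P] xnz h by simp
    have x0: "ord_at P (to_fract x) \<ge> 0" using ordP_to_fract(1)[OF P] xnz by blast
    show ?thesis
    proof (cases "P = Q")
      case True then show ?thesis using e x0 o by simp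
    next
      case False
      show ?thesis
      proof (cases "P \<in> F")
        case True
        then have "int (nat (k P - ord_at P h)) \<le> ord_at P (to_fract x)" using x(2) by blast
        moreover have "k P - ord_at P h \<le> int (nat (k P - ord_at P h))" by simp
        ultimately have "ord_at P (to_fract x) \<ge> k P - ord_at P h" by linarith
        then show ?thesis using e by simp
      next
        case nF: False
        then have "k P = 0" "ord_at P h = 0" using False P unfolding F_def by auto
        then show ?thesis using e x0 by simp
      qed
    qed
  qed
  then have "to_fract x * h \<in> Mk k" unfolding Mk_def using xnz h by simp
  then show ?thesis using x(1) by blast
qed

lemma exists_exact:
  assumes Q: "prime_divisor Q" and k: "finsupp k"
  shows "\<exists>u. u \<in> Mk k \<and> u \<noteq> 0 \<and> ord_at Q u = k Q"
proof -
  interpret dq T Q using Q by unfold_locales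
  define u0 where "u0 = (if k Q \<ge> 0 then to_fract uf ^ nat (k Q) else inverse (to_fract uf ^ nat (- k Q)))"
  have u0nz: "u0 \<noteq> 0" unfolding u0_def using uf_nz by simp
  have ou0: "ord_at Q u0 = k Q"
  proof (cases "k Q \<ge> 0")
    case True then show ?thesis unfolding u0_def using ordP_power[OF Q, of "to_fract uf"] uf_nz ord_uf by simp
  next
    case False then show ?thesis unfolding u0_def
      using ord_inverse[of "to_fract uf ^ nat (- k Q)"] ordP_power[OF Q, of "to_fract uf"] uf_nz ord_uf by simp
  qed
  obtain x where x: "x \<notin> Q" "to_fract x * u0 \<in> Mk k" using local_mult[OF Q u0nz k] ou0 by auto
  have xnz: "x \<noteq> 0" using x(1) notQ_nz by blast
  have "ord_at Q (to_fract x * u0) = k Q" using ordP_mult[OF Q] ord_to_fract(2)[OF xnz x(1)] ou0 xnz u0nz by simp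
  then show ?thesis using x(2) xnz u0nz by (intro exI[of _ "to_fract x * u0"]) simp
qed

lemma no_pd_if_field:
  assumes "maximal_ideal ({0}::'a set)" shows "\<not> prime_divisor (P::'a set)"
proof
  assume P: "prime_divisor P"
  then obtain p where p: "p \<in> P" "p \<noteq> 0" using ideal_0 unfolding prime_divisor_def prime_ideal_def by blast
  define I where "I = {p * r | r. True}"
  have "ring_ideal I" unfolding ring_ideal_def I_def
  proof (intro conjI ballI allI)
    show "0 \<in> {p * r |r. True}" by (intro CollectI exI[of _ 0]) simp
  next
    fix x y assume "x \<in> {p * r |r. True}" "y \<in> {p * r |r. True}"
    then obtain r r' where "x = p * r" "y = p * r'" by blast
    then show "x + y \<in> {p * r |r. True}" by (intro CollectI exI[of _ "r + r'"]) (simp add: algebra_simps)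
  next
    fix c x assume "x \<in> {p * r |r. True}"
    then obtain r where "x = p * r" by blast
    then show "c * x \<in> {p * r |r. True}" by (intro CollectI exI[of _ "c * r"]) (simp add: algebra_simps)
  qed
  moreover have "p \<in> I" unfolding I_def by (intro CollectI exI[of _ 1]) simp
  moreover have "{0} \<subseteq> I" using calculation(1) ideal_0 by blast
  ultimately have "I = {0} \<or> I = UNIV" using assms unfolding maximal_ideal_def by blast
  then have "I = UNIV" using \<open>p \<in> I\<close> p(2) by blast
  then have "1 \<in> I" by blast
  then obtain r where r: "1 = p * r" unfolding I_def by blast
  have Pid: "ring_ideal P" "P \<noteq> UNIV" using P unfolding prime_divisor_def prime_ideal_def by auto
  have "p * r \<in> P" by (rule ideal_mult2[OF Pid(1) p(1)])
  then have "1 \<in> P" using r by simp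
  then show False using Pid ideal_UNIV1 by blast
qed

lemma product_formula:
  assumes k1: "finsupp k1" and k2: "finsupp k2"
  shows "Mk (\<lambda>P. k1 P + k2 P) \<subseteq> Span {u * v | u v. u \<in> Mk k1 \<and> v \<in> Mk k2}"
proof
  fix g assume g: "g \<in> Mk (\<lambda>P. k1 P + k2 P)"
  define S where "S = {u * v | u v. u \<in> Mk k1 \<and> v \<in> Mk k2}"
  show "g \<in> Span S"
  proof (cases "g = 0")
    case True then show ?thesis using Span_0 S_def by simp
  next
    case gnz: False
    define J where "J = {x. to_fract x * g \<in> Span S}"
    have Jid: "ring_ideal J" unfolding ring_ideal_def J_def
    proof (intro conjI ballI allI)
      show "0 \<in> {x. to_fract x * g \<in> Span S}" using Span_0 by simp
    next
      fix x y assume "x \<in> {x. to_fract x * g \<in> Span S}" "y \<in> {x. to_fract x * g \<in> Span S}"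
      then have "to_fract x * g + to_fract y * g \<in> Span S" using Span_add by auto
      then show "x + y \<in> {x. to_fract x * g \<in> Span S}" by (simp add: distrib_right)
    next
      fix r x assume "x \<in> {x. to_fract x * g \<in> Span S}"
      then have "to_fract r * (to_fract x * g) \<in> Span S" using Span_smult by auto
      then show "r * x \<in> {x. to_fract x * g \<in> Span S}" by (simp add: mult.assoc)
    qed
    show ?thesis
    proof (cases "1 \<in> J")
      case True then show ?thesis unfolding J_def by simp
    next
      case False
      obtain M where M: "maximal_ideal M" "J \<subseteq> M" using exists_maximal[OF noeth Jid False] by blast
      show ?thesis
      proof (cases "M = {0}")
        case True
        then have mz: "maximal_ideal ({0}::'a set)" using M(1) by simp
        have npd: "\<And>P::'a set. \<not> prime_divisor P" by (rule no_pd_if_field[OF mz])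
        have "g \<in> Mk k1" "1 \<in> Mk k2" unfolding Mk_def using npd gnz by auto
        then have "g * 1 \<in> S" unfolding S_def by blast
        then have "1 \<in> J" unfolding J_def using Span_base by simp
        then show ?thesis using False by blast
      next
        case Mnz: False
        have Q: "prime_divisor M" using max_is_prime[OF M(1)] Mnz by (simp add: prime_divisor_def)
        obtain u where u: "u \<in> Mk k1" "u \<noteq> 0" "ord_at M u = k1 M" using exists_exact[OF Q k1] by blast
        define h where "h = g / u"
        have hnz: "h \<noteq> 0" using gnz u(2) h_def by simp
        have "ord_at M g \<ge> k1 M + k2 M" using g gnz Q unfolding Mk_def by auto
        then have "ord_at M h \<ge> k2 M" using ordP_divide[OF Q gnz u(2)] u(3) h_def by simp
        then obtain x where x: "x \<notin> M" "to_fract x * h \<in> Mk k2" using local_mult[OF Q hnz k2] by blast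
        have "to_fract x * g = u * (to_fract x * h)" using u(2) h_def by simp
        then have "to_fract x * g \<in> S" unfolding S_def using u(1) x(2) by blast
        then have "x \<in> J" unfolding J_def using Span_base by simp
        then show ?thesis using M(2) x(1) by blast
      qed
    qed
  qed
qed

lemma Mk_fg:
  assumes k: "finsupp k" shows "\<exists>X. finite X \<and> X \<subseteq> Mk k \<and> Mk k \<subseteq> Span X"
proof -
  define F where "F = {P. prime_divisor P \<and> k P \<noteq> 0}"
  have fF: "finite F" using k unfolding finsupp_def F_def .
  have pF: "\<forall>P\<in>F. prime_divisor P" unfolding F_def by blast
  obtain c where c: "c \<noteq> 0" "\<forall>P\<in>F. ord_at P (to_fract c) \<ge> int (nat (- k P))"
    using approx0[OF fF pF, of "\<lambda>P. nat (- k P)"] by blast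
  have cint: "to_fract c * g \<in> range to_fract" if g: "g \<in> Mk k" for g
  proof (cases "g = 0")
    case True then show ?thesis by (metis mult_zero_right rangeI to_fract_0)
  next
    case False
    have "ord_at P (to_fract c * g) \<ge> 0" if P: "prime_divisor P" for P
    proof -
      have e: "ord_at P (to_fract c * g) = ord_at P (to_fract c) + ord_at P g"
        using ordP_mult[OF P] c(1) False by simp
      have "ord_at P g \<ge> k P" using g False P unfolding Mk_def by auto
      moreover have "ord_at P (to_fract c) \<ge> 0" using ordP_to_fract(1)[OF P] c(1) by blast
      moreover have "ord_at P (to_fract c) \<ge> - k P" if "P \<in> F"
      proof -
        have "int (nat (- k P)) \<le> ord_at P (to_fract c)" using c(2) that by blast
        moreover have "- k P \<le> int (nat (- k P))" by simp
        ultimately show ?thesis by linarith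
      qed
      ultimately show ?thesis
      proof (cases "k P = 0")
        case True
        then show ?thesis using e \<open>ord_at P g \<ge> k P\<close> \<open>ord_at P (to_fract c) \<ge> 0\<close> by linarith
      next
        case False
        then have "P \<in> F" using P unfolding F_def by blast
        then have "ord_at P (to_fract c) \<ge> - k P" using \<open>P \<in> F \<Longrightarrow> _\<close> by blast
        then show ?thesis using e \<open>ord_at P g \<ge> k P\<close> by linarith
      qed
    qed
    then have "\<forall>P. prime_divisor P \<longrightarrow> ord_at P (to_fract c * g) \<ge> 0" by blast
    then show ?thesis by (rule ord_nonneg_integral)
  qed
  define I where "I = {a. to_fract a / to_fract c \<in> Mk k}"
  have Iid: "ring_ideal I" unfolding ring_ideal_def I_def
  proof (intro conjI ballI allI)
    show "0 \<in> {a. to_fract a / to_fract c \<in> Mk k}" using Mk_0 by simp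
  next
    fix x y assume "x \<in> {a. to_fract a / to_fract c \<in> Mk k}" "y \<in> {a. to_fract a / to_fract c \<in> Mk k}"
    then have "to_fract x / to_fract c + to_fract y / to_fract c \<in> Mk k" using Mk_add by auto
    then show "x + y \<in> {a. to_fract a / to_fract c \<in> Mk k}" by (simp add: add_divide_distrib)
  next
    fix r x assume "x \<in> {a. to_fract a / to_fract c \<in> Mk k}"
    then have "to_fract r * (to_fract x / to_fract c) \<in> Mk k" by (intro Mk_smult) simp
    then show "r * x \<in> {a. to_fract a / to_fract c \<in> Mk k}" by simp
  qed
  obtain S where S: "finite S" "I = ideal_span S" using noeth Iid unfolding noetherian_ring_def by blast
  define X where "X = (\<lambda>s. to_fract s / to_fract c) ` S"
  have "finite X" using S(1) X_def by simp
  moreover have "X \<subseteq> Mk k"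
  proof
    fix x assume "x \<in> X"
    then obtain s where "s \<in> S" "x = to_fract s / to_fract c" using X_def by blast
    then have "s \<in> ideal_span S" by (intro ideal_span_base) blast
    then have "s \<in> I" using S(2) by simp
    then show "x \<in> Mk k" using \<open>x = to_fract s / to_fract c\<close> unfolding I_def by simp
  qed
  moreover have "Mk k \<subseteq> Span X"
  proof
    fix g assume g: "g \<in> Mk k"
    obtain a where a: "to_fract c * g = to_fract a" using cint[OF g] by blast
    have ga: "g = to_fract a / to_fract c" using a c(1) by (simp add: field_simps)
    then have "a \<in> I" using g I_def by simp
    then obtain m::nat and d s where ds: "\<forall>i<m. s i \<in> S" "a = (\<Sum>i<m. d i * s i)"
      using S(2) unfolding ideal_span_def mem_Collect_eq by blast
    have "g = (\<Sum>i<m. to_fract (d i) * (to_fract (s i) / to_fract c))"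
      unfolding ga ds(2) by (simp add: sum_divide_distrib)
    moreover have "\<forall>i<m. to_fract (s i) / to_fract c \<in> X" using ds(1) X_def by blast
    ultimately show "g \<in> Span X" unfolding Span_def mem_Collect_eq
      by (intro exI[of _ m] exI[of _ d] exI[of _ "\<lambda>i. to_fract (s i) / to_fract c"]) simp
  qed
  ultimately show ?thesis by blast
qed

end

lemma common_N: "finite V \<Longrightarrow> \<exists>N::nat. N > 0 \<and> (\<forall>x\<in>V. \<exists>z::int. of_nat N * (x::rat) = of_int z)"
proof (induction V rule: finite_induct)
  case empty then show ?case by (intro exI[of _ 1]) simp
next
  case (insert x V)
  then obtain N where N: "N > 0" "\<forall>y\<in>V. \<exists>z::int. of_nat N * y = of_int z" by blast
  obtain p q where pq: "quotient_of x = (p, q)" by (cases "quotient_of x") auto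
  have q: "q > 0" using quotient_of_denom_pos[OF pq] .
  have xpq: "x = of_int p / of_int q" using quotient_of_div[OF pq] .
  define N' where "N' = N * nat q"
  have "N' > 0" using N(1) q N'_def by simp
  moreover have "\<exists>z::int. of_nat N' * y = of_int z" if yin: "y \<in> insert x V" for y
  proof (cases "y = x")
    case True
    have "of_nat N' * y = of_int (int N * p)" unfolding True N'_def xpq using q by simp
    then show ?thesis by blast
  next
    case False
    then obtain z where "of_nat N * y = of_int z" using N(2) yin by auto
    then have "of_nat N' * y = of_int (q * z)" unfolding N'_def using q
      by (simp add: algebra_simps)
    then show ?thesis by blast
  qed
  ultimately show ?case by blast
qed

lemma poly_expand: "f = (\<Sum>m\<in>Poly_Mapping.keys f. Poly_Mapping.single m (Poly_Mapping.lookup f m))"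
proof (rule poly_mapping_eqI)
  fix k
  have "Poly_Mapping.lookup (\<Sum>m\<in>Poly_Mapping.keys f. Poly_Mapping.single m (Poly_Mapping.lookup f m)) k
      = (\<Sum>m\<in>Poly_Mapping.keys f. (if m = k then Poly_Mapping.lookup f m else 0))"
    by (simp add: lookup_sum lookup_single when_def)
  also have "\<dots> = Poly_Mapping.lookup f k" by (simp add: sum.delta' in_keys_iff)
  finally show "Poly_Mapping.lookup f k = Poly_Mapping.lookup (\<Sum>m\<in>Poly_Mapping.keys f. Poly_Mapping.single m (Poly_Mapping.lookup f m)) k" by simp
qed

lemma alg_marker: True by simp

locale alg = dd T for T :: "'a::idom itself" +
  fixes r :: nat and D :: "nat \<Rightarrow> 'a set \<Rightarrow> rat"
  assumes Qd: "\<forall>i<r. Q_divisor (D i)"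
begin

definition Dm :: "(nat \<Rightarrow>\<^sub>0 nat) \<Rightarrow> 'a set \<Rightarrow> rat" where
  "Dm m P = (\<Sum>i<r. of_nat (Poly_Mapping.lookup m i) * D i P)"

definition kf :: "(nat \<Rightarrow>\<^sub>0 nat) \<Rightarrow> 'a set \<Rightarrow> int" where
  "kf m P = - \<lfloor>Dm m P\<rfloor>"

lemma H0_eq: "H0 (\<lambda>P. \<Sum>i<r. of_nat (Poly_Mapping.lookup m i) * D i P) = Mk (kf m)"
proof -
  have e: "(0 \<le> a + b) = (- b \<le> a)" for a b :: int by linarith
  show ?thesis unfolding H0_def Mk_def kf_def Dm_def by (simp add: e)
qed

lemma finsupp_kf: "finsupp (kf m)"
proof -
  have "{P. prime_divisor P \<and> kf m P \<noteq> 0} \<subseteq> (\<Union>i<r. {P. D i P \<noteq> 0})"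
  proof
    fix P assume "P \<in> {P. prime_divisor P \<and> kf m P \<noteq> 0}"
    then have "kf m P \<noteq> 0" by blast
    show "P \<in> (\<Union>i<r. {P. D i P \<noteq> 0})"
    proof (rule ccontr)
      assume "P \<notin> (\<Union>i<r. {P. D i P \<noteq> 0})"
      then have "\<forall>i<r. D i P = 0" by blast
      then have "Dm m P = 0" unfolding Dm_def by simp
      then show False using \<open>kf m P \<noteq> 0\<close> unfolding kf_def by simp
    qed
  qed
  moreover have "finite (\<Union>i<r. {P. D i P \<noteq> 0})" using Qd unfolding Q_divisor_def by blast
  ultimately show ?thesis unfolding finsupp_def using finite_subset by blast
qed

lemma Dm_add: "Dm (m1 + m2) P = Dm m1 P + Dm m2 P"
  unfolding Dm_def by (simp add: lookup_add distrib_right sum.distrib)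

lemma kf_add_le: "kf (m1 + m2) P \<le> kf m1 P + kf m2 P"
  unfolding kf_def Dm_add using le_floor_add[of "Dm m1 P" "Dm m2 P"] by linarith

lemma Dm_single: "i < r \<Longrightarrow> Dm (Poly_Mapping.single i N) P = of_nat N * D i P"
proof -
  assume i: "i < r"
  have "Dm (Poly_Mapping.single i N) P = (\<Sum>j<r. (if i = j then of_nat N * D i P else 0))"
    unfolding Dm_def
  proof (rule sum.cong)
    fix j assume "j \<in> {..<r}"
    show "of_nat (Poly_Mapping.lookup (Poly_Mapping.single i N) j) * D j P = (if i = j then of_nat N * D i P else 0)"
      by (cases "i = j") (simp_all add: lookup_single)
  qed simp
  also have "\<dots> = of_nat N * D i P" using i by (simp add: sum.delta)
  finally show ?thesis .
qed

lemma kf_split: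
  assumes i: "i < r" and z: "of_nat N * D i P = of_int z"
  shows "kf (Poly_Mapping.single i N + m') P = kf (Poly_Mapping.single i N) P + kf m' P"
proof -
  have "Dm (Poly_Mapping.single i N + m') P = Dm m' P + of_int z" using Dm_add Dm_single[OF i] z by simp
  then have "\<lfloor>Dm (Poly_Mapping.single i N + m') P\<rfloor> = \<lfloor>Dm m' P\<rfloor> + z" by (metis floor_add_int)
  moreover have "\<lfloor>Dm (Poly_Mapping.single i N) P\<rfloor> = z" using Dm_single[OF i] z by simp
  ultimately show ?thesis unfolding kf_def by simp
qed

lemma SR_iff: "f \<in> section_ring r D \<longleftrightarrow>
   (\<forall>m. Poly_Mapping.lookup f m \<noteq> 0 \<longrightarrow> Poly_Mapping.keys m \<subseteq> {..<r} \<and> Poly_Mapping.lookup f m \<in> Mk (kf m))"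
  unfolding section_ring_def H0_eq by simp

lemma SR_0: "0 \<in> section_ring r D" unfolding SR_iff by simp

lemma SR_add: "f \<in> section_ring r D \<Longrightarrow> g \<in> section_ring r D \<Longrightarrow> f + g \<in> section_ring r D"
proof -
  assume f: "f \<in> section_ring r D" and g: "g \<in> section_ring r D"
  show ?thesis unfolding SR_iff
  proof (intro allI impI)
    fix m assume nz: "Poly_Mapping.lookup (f + g) m \<noteq> 0"
    then have "Poly_Mapping.lookup f m \<noteq> 0 \<or> Poly_Mapping.lookup g m \<noteq> 0" by (auto simp: lookup_add)
    then have k: "Poly_Mapping.keys m \<subseteq> {..<r}" using f g unfolding SR_iff by blast
    have "Poly_Mapping.lookup f m \<in> Mk (kf m)" "Poly_Mapping.lookup g m \<in> Mk (kf m)"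
      using f g Mk_0 unfolding SR_iff by (metis)+
    then have "Poly_Mapping.lookup (f + g) m \<in> Mk (kf m)" by (simp add: lookup_add Mk_add)
    then show "Poly_Mapping.keys m \<subseteq> {..<r} \<and> Poly_Mapping.lookup (f + g) m \<in> Mk (kf m)" using k by blast
  qed
qed

lemma SR_sum: "(\<And>x. x \<in> A \<Longrightarrow> f x \<in> section_ring r D) \<Longrightarrow> sum f A \<in> section_ring r D"
  by (induction A rule: infinite_finite_induct) (auto simp: SR_0 SR_add)

lemma SR_single: "(c \<noteq> 0 \<Longrightarrow> Poly_Mapping.keys m \<subseteq> {..<r} \<and> c \<in> Mk (kf m)) \<Longrightarrow>
   Poly_Mapping.single m c \<in> section_ring r D"
  unfolding SR_iff by (auto simp: lookup_single when_def)

lemma SR_single_D: "Poly_Mapping.single m c \<in> section_ring r D \<Longrightarrow> c \<noteq> 0 \<Longrightarrow>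
   Poly_Mapping.keys m \<subseteq> {..<r} \<and> c \<in> Mk (kf m)"
  unfolding SR_iff by (metis lookup_single_eq)

lemma SR_mult: assumes f: "f \<in> section_ring r D" and g: "g \<in> section_ring r D" shows "f * g \<in> section_ring r D"
proof -
  have "f * g = (\<Sum>m1\<in>Poly_Mapping.keys f. Poly_Mapping.single m1 (Poly_Mapping.lookup f m1)) *
      (\<Sum>m2\<in>Poly_Mapping.keys g. Poly_Mapping.single m2 (Poly_Mapping.lookup g m2))"
    using poly_expand[of f] poly_expand[of g] by simp
  also have "\<dots> = (\<Sum>m2\<in>Poly_Mapping.keys g. \<Sum>m1\<in>Poly_Mapping.keys f.
      Poly_Mapping.single (m1 + m2) (Poly_Mapping.lookup f m1 * Poly_Mapping.lookup g m2))"
    by (simp add: sum_distrib_left sum_distrib_right mult_single)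
  also have "\<dots> \<in> section_ring r D"
  proof (rule SR_sum)
    fix m2 assume m2: "m2 \<in> Poly_Mapping.keys g"
    show "(\<Sum>m1\<in>Poly_Mapping.keys f. Poly_Mapping.single (m1 + m2) (Poly_Mapping.lookup f m1 * Poly_Mapping.lookup g m2)) \<in> section_ring r D"
    proof (rule SR_sum)
      fix m1 assume m1: "m1 \<in> Poly_Mapping.keys f"
      have f': "\<forall>m. Poly_Mapping.lookup f m \<noteq> 0 \<longrightarrow> Poly_Mapping.keys m \<subseteq> {..<r} \<and> Poly_Mapping.lookup f m \<in> Mk (kf m)"
        using f unfolding SR_iff .
      have g': "\<forall>m. Poly_Mapping.lookup g m \<noteq> 0 \<longrightarrow> Poly_Mapping.keys m \<subseteq> {..<r} \<and> Poly_Mapping.lookup g m \<in> Mk (kf m)"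
        using g unfolding SR_iff .
      have a: "Poly_Mapping.keys m1 \<subseteq> {..<r}" "Poly_Mapping.lookup f m1 \<in> Mk (kf m1)"
        using f'[rule_format, of m1] m1 by (simp_all add: in_keys_iff)
      have b: "Poly_Mapping.keys m2 \<subseteq> {..<r}" "Poly_Mapping.lookup g m2 \<in> Mk (kf m2)"
        using g'[rule_format, of m2] m2 by (simp_all add: in_keys_iff)
      have k: "Poly_Mapping.keys (m1 + m2) \<subseteq> {..<r}" using a(1) b(1) keys_add[of m1 m2] by blast
      have "Poly_Mapping.lookup f m1 * Poly_Mapping.lookup g m2 \<in> Mk (\<lambda>P. kf m1 P + kf m2 P)"
        using Mk_mult[OF a(2) b(2)] .
      moreover have "Mk (\<lambda>P. kf m1 P + kf m2 P) \<subseteq> Mk (kf (m1 + m2))"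
        by (rule Mk_mono) (simp add: kf_add_le)
      ultimately have "Poly_Mapping.lookup f m1 * Poly_Mapping.lookup g m2 \<in> Mk (kf (m1 + m2))" by blast
      then show "Poly_Mapping.single (m1 + m2) (Poly_Mapping.lookup f m1 * Poly_Mapping.lookup g m2) \<in> section_ring r D"
        using k by (intro SR_single) simp
    qed
  qed
  finally show ?thesis .
qed

end

lemma SA_0: "0 \<in> A0_subalgebra G"
  using A0_subalgebra.scalar[of 0 G] by simp

lemma SA_sum: "(\<And>x. x \<in> A \<Longrightarrow> f x \<in> A0_subalgebra G) \<Longrightarrow> sum f A \<in> A0_subalgebra G"
  by (induction A rule: infinite_finite_induct) (auto simp: SA_0 A0_subalgebra.add)

context dd begin

lemma SA_span:
  assumes "\<forall>x\<in>X. Poly_Mapping.single m x \<in> A0_subalgebra G" "g \<in> Span X"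
  shows "Poly_Mapping.single m g \<in> A0_subalgebra G"
  using assms(2)
proof (rule Span_induct)
  show "Poly_Mapping.single m 0 \<in> A0_subalgebra G" using SA_0 by simp
next
  fix y c z assume y: "Poly_Mapping.single m y \<in> A0_subalgebra G" and z: "z \<in> X"
  have "Poly_Mapping.single m (y + to_fract c * z) =
      Poly_Mapping.single m y + Poly_Mapping.single 0 (to_fract c) * Poly_Mapping.single m z"
    by (simp add: mult_single single_add)
  also have "\<dots> \<in> A0_subalgebra G"
    using y assms(1) z by (intro A0_subalgebra.add A0_subalgebra.mult A0_subalgebra.scalar) auto
  finally show "Poly_Mapping.single m (y + to_fract c * z) \<in> A0_subalgebra G" .
qed

end

context alg begin

theorem fg: "finitely_generated_A0_algebra (section_ring r D)"
proof -
  define V where "V = (\<Union>i<r. D i ` {P. D i P \<noteq> 0})"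
  have "finite V" unfolding V_def using Qd unfolding Q_divisor_def by auto
  then obtain N where N: "N > 0" "\<forall>x\<in>V. \<exists>z::int. of_nat N * x = of_int z" using common_N by blast
  have Nint: "\<exists>z::int. of_nat N * D i P = of_int z" if "i < r" for i P
  proof (cases "D i P = 0")
    case True then show ?thesis by (intro exI[of _ 0]) simp
  next
    case False then have "D i P \<in> V" unfolding V_def using that by blast
    then show ?thesis using N(2) by blast
  qed
  define T where "T = {\<rho>. Poly_Mapping.keys \<rho> \<subseteq> {..<r} \<and> (\<forall>i. Poly_Mapping.lookup \<rho> i \<le> N)}"
  have fT: "finite T"
  proof -
    have sub: "Poly_Mapping.lookup ` T \<subseteq> {f. \<forall>x. (x \<in> {..<r} \<longrightarrow> f x \<in> {..N}) \<and> (x \<notin> {..<r} \<longrightarrow> f x = 0)}"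
    proof
      fix f assume "f \<in> Poly_Mapping.lookup ` T"
      then obtain \<rho> where \<rho>: "\<rho> \<in> T" "f = Poly_Mapping.lookup \<rho>" by blast
      have "(x \<in> {..<r} \<longrightarrow> f x \<in> {..N}) \<and> (x \<notin> {..<r} \<longrightarrow> f x = 0)" for x
      proof -
        have "f x \<le> N" using \<rho> unfolding T_def by simp
        moreover have "x \<notin> {..<r} \<Longrightarrow> f x = 0"
        proof -
          assume "x \<notin> {..<r}"
          then have "x \<notin> Poly_Mapping.keys \<rho>" using \<rho>(1) unfolding T_def by blast
          then show "f x = 0" using \<rho>(2) by (simp add: in_keys_iff)
        qed
        ultimately show ?thesis by simp
      qed
      then show "f \<in> {f. \<forall>x. (x \<in> {..<r} \<longrightarrow> f x \<in> {..N}) \<and> (x \<notin> {..<r} \<longrightarrow> f x = 0)}" by blast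
    qed
    have "finite (Poly_Mapping.lookup ` T)"
      by (rule finite_subset[OF sub finite_set_of_finite_funs]) simp_all
    moreover have "inj_on Poly_Mapping.lookup T" by (intro inj_onI poly_mapping_eqI) simp
    ultimately show ?thesis by (rule finite_imageD)
  qed
  have "\<forall>\<rho>. \<exists>X. finite X \<and> X \<subseteq> Mk (kf \<rho>) \<and> Mk (kf \<rho>) \<subseteq> Span X"
    using Mk_fg finsupp_kf by blast
  then obtain X where X: "\<And>\<rho>. finite (X \<rho>)" "\<And>\<rho>. X \<rho> \<subseteq> Mk (kf \<rho>)" "\<And>\<rho>. Mk (kf \<rho>) \<subseteq> Span (X \<rho>)"
    by metis
  define G where "G = (\<Union>\<rho>\<in>T. Poly_Mapping.single \<rho> ` X \<rho>)"
  have fG: "finite G" unfolding G_def using fT X(1) by blast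
  have GSR: "G \<subseteq> section_ring r D"
  proof
    fix f assume "f \<in> G"
    then obtain \<rho> x where h: "\<rho> \<in> T" "x \<in> X \<rho>" "f = Poly_Mapping.single \<rho> x" unfolding G_def by blast
    have "Poly_Mapping.keys \<rho> \<subseteq> {..<r}" using h(1) unfolding T_def by blast
    moreover have "x \<in> Mk (kf \<rho>)" using X(2) h(2) by blast
    ultimately show "f \<in> section_ring r D" unfolding h(3) by (intro SR_single) simp
  qed
  define SA where "SA = A0_subalgebra G"
  have genT: "Poly_Mapping.single \<rho> g \<in> SA" if "\<rho> \<in> T" "g \<in> Mk (kf \<rho>)" for \<rho> g
  proof -
    have "\<forall>x\<in>X \<rho>. Poly_Mapping.single \<rho> x \<in> SA"
      unfolding SA_def G_def using that(1) by (auto intro: A0_subalgebra.gen)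
    moreover have "g \<in> Span (X \<rho>)" using X(3) that(2) by blast
    ultimately show ?thesis unfolding SA_def by (rule SA_span)
  qed
  have key: "\<forall>m. (\<Sum>i<r. Poly_Mapping.lookup m i) = n \<longrightarrow> Poly_Mapping.keys m \<subseteq> {..<r} \<longrightarrow>
      (\<forall>g\<in>Mk (kf m). Poly_Mapping.single m g \<in> SA)" for n
  proof (induction n rule: less_induct)
    case (less n)
    show ?case
    proof (intro allI impI ballI)
      fix m g assume mn: "(\<Sum>i<r. Poly_Mapping.lookup m i) = n" and km: "Poly_Mapping.keys m \<subseteq> {..<r}"
        and g: "g \<in> Mk (kf m)"
      show "Poly_Mapping.single m g \<in> SA"
      proof (cases "\<forall>i. Poly_Mapping.lookup m i \<le> N")
        case True
        then have "m \<in> T" using km unfolding T_def by blast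
        then show ?thesis using genT g by blast
      next
        case False
        then obtain i where i: "Poly_Mapping.lookup m i > N" by (meson not_le)
        then have "i \<in> Poly_Mapping.keys m" using N(1) by (simp add: in_keys_iff)
        then have ir: "i < r" using km by blast
        define s where "s = Poly_Mapping.single i N"
        define m' where "m' = m - s"
        have lm': "Poly_Mapping.lookup m' j = Poly_Mapping.lookup m j - Poly_Mapping.lookup s j" for j
          unfolding m'_def by (simp add: minus_poly_mapping.rep_eq)
        have ls: "Poly_Mapping.lookup s j = (if j = i then N else 0)" for j
          unfolding s_def by (simp add: lookup_single when_def)
        have msplit: "m = s + m'"
        proof (rule poly_mapping_eqI)
          fix j show "Poly_Mapping.lookup m j = Poly_Mapping.lookup (s + m') j"
            using i by (simp add: lookup_add lm' ls)
        qed
        have km': "Poly_Mapping.keys m' \<subseteq> {..<r}"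
        proof
          fix j assume "j \<in> Poly_Mapping.keys m'"
          then have "Poly_Mapping.lookup m j \<noteq> 0" by (simp add: in_keys_iff lm')
          then show "j \<in> {..<r}" using km by (simp add: in_keys_iff subset_iff)
        qed
        have "(\<Sum>j<r. Poly_Mapping.lookup m j) = (\<Sum>j<r. Poly_Mapping.lookup s j) + (\<Sum>j<r. Poly_Mapping.lookup m' j)"
          by (subst msplit) (simp add: lookup_add sum.distrib)
        also have "(\<Sum>j<r. Poly_Mapping.lookup s j) = N" using ir by (simp add: ls sum.delta)
        finally have lt: "(\<Sum>j<r. Poly_Mapping.lookup m' j) < n" using mn N(1) by simp
        have sT: "s \<in> T" unfolding T_def s_def using ir by (auto simp: lookup_single when_def)
        have kfm: "kf m = (\<lambda>P. kf s P + kf m' P)"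
        proof
          fix P
          obtain z where "of_nat N * D i P = of_int z" using Nint[OF ir] by blast
          then show "kf m P = kf s P + kf m' P" unfolding s_def using kf_split[OF ir] msplit s_def by metis
        qed
        have "g \<in> Span {u * v | u v. u \<in> Mk (kf s) \<and> v \<in> Mk (kf m')}"
        proof -
          have "g \<in> Mk (\<lambda>P. kf s P + kf m' P)" using g kfm by simp
          then show ?thesis using product_formula[OF finsupp_kf[of s] finsupp_kf[of m']] by blast
        qed
        moreover have "\<forall>x\<in>{u * v | u v. u \<in> Mk (kf s) \<and> v \<in> Mk (kf m')}. Poly_Mapping.single m x \<in> SA"
        proof
          fix x assume "x \<in> {u * v | u v. u \<in> Mk (kf s) \<and> v \<in> Mk (kf m')}"
          then obtain u v where uv: "x = u * v" "u \<in> Mk (kf s)" "v \<in> Mk (kf m')" by blast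
          have "Poly_Mapping.single s u \<in> SA" using genT[OF sT uv(2)] .
          moreover have "Poly_Mapping.single m' v \<in> SA" using less.IH[OF lt] km' uv(3) by blast
          ultimately have "Poly_Mapping.single s u * Poly_Mapping.single m' v \<in> SA"
            unfolding SA_def by (rule A0_subalgebra.mult)
          then show "Poly_Mapping.single m x \<in> SA" using msplit uv(1) by (simp add: mult_single)
        qed
        ultimately show ?thesis unfolding SA_def by (intro SA_span) auto
      qed
    qed
  qed
  have "section_ring r D \<subseteq> SA"
  proof
    fix f assume f: "f \<in> section_ring r D"
    have "(\<Sum>m\<in>Poly_Mapping.keys f. Poly_Mapping.single m (Poly_Mapping.lookup f m)) \<in> SA"
      unfolding SA_def
    proof (rule SA_sum)
      fix m assume "m \<in> Poly_Mapping.keys f"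
      then have "Poly_Mapping.keys m \<subseteq> {..<r}" "Poly_Mapping.lookup f m \<in> Mk (kf m)"
        using f unfolding SR_iff by (simp_all add: in_keys_iff)
      then show "Poly_Mapping.single m (Poly_Mapping.lookup f m) \<in> A0_subalgebra G"
        using key SA_def by blast
    qed
    then show "f \<in> SA" using poly_expand[of f] by simp
  qed
  moreover have "SA \<subseteq> section_ring r D"
  proof
    fix f assume "f \<in> SA"
    then show "f \<in> section_ring r D" unfolding SA_def
    proof (induction rule: A0_subalgebra.induct)
      case (gen x) then show ?case using GSR by blast
    next
      case (scalar a)
      show ?case
      proof (rule SR_single)
        assume "to_fract a \<noteq> 0"
        then have anz: "a \<noteq> 0" by simp
        have "to_fract a \<in> Mk (kf 0)" unfolding Mk_def kf_def Dm_def
          using ordP_to_fract(1)[OF _ anz] anz by simp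
        then show "Poly_Mapping.keys 0 \<subseteq> {..<r} \<and> to_fract a \<in> Mk (kf 0)" by simp
      qed
    next
      case (add x y) then show ?case using SR_add by blast
    next
      case (mult x y) then show ?case using SR_mult by blast
    qed
  qed
  ultimately have "SA = section_ring r D" by blast
  then show ?thesis unfolding finitely_generated_A0_algebra_def SA_def using fG GSR by blast
qed

end

theorem lemma2p8:
  fixes r :: nat and D :: "nat \<Rightarrow> 'a::idom set \<Rightarrow> rat"
  assumes "dedekind_domain TYPE('a)"
    and "\<forall>i<r. Q_divisor (D i)"
  shows "finitely_generated_A0_algebra (section_ring r D)"
proof -
  interpret alg "TYPE('a)" r D using assms by unfold_locales
  show ?thesis by (rule fg)
qed


end
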